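(* Let $\Omega=(0,L)^2$, $\varepsilon>0$, $T>0$, and let $u(\mathbf{x},t)$ be a sufficiently smooth solution of the Allen–Cahn equation $\partial_tu=\varepsilon^2\Delta u-f(u)$ on $\Omega\times(0,T]$, $f(u)=u^3-u$, with periodic boundary conditions and smooth initial data $u_0$ with $|u_0|\le1$. Let $M$ be a positive integer, $h=L/M$, $\Lambda_h$ the standard five-point central-difference matrix of the Laplacian on the periodic grid $\{\mathbf{x}_h=(ih,jh):1\le i,j\le M\}$, and $\|\cdot\|_\infty$ the grid maximum norm. Let $0=t_0<\dots<t_N=T$, $\tau_k=t_k-t_{k-1}$, $\tau=\max_k\tau_k$, $r_k=\tau_k/\tau_{k-1}$ ($2\le k\le N$), $r_1:=0$. Let $u_h^n$ solve $$D_2u^n=\varepsilon^2\Lambda_hu^n-f(u^n),\quad 1\le n\le N,\qquad u^0=u_0(\mathbf{x}_h),$$ with $f$ componentwise, $D_2u^1=(u^1-u^0)/\tau_1$ and for $n\ge2$ $D_2u^n=\frac{1+2r_n}{\tau_n(1+r_n)}(u^n-u^{n-1})-\frac{r_n^2}{\tau_n(1+r_n)}(u^{n-1}-u^{n-2})$. Let $r_s\in[1,1+\sqrt2)$ satisfy $0<r_k\le r_s$ for $2\le k\le N$, set $\eta=\frac{2r_s^2}{(1+r_s)^2}$, and assume $$\tau_n\le\frac{(1+2r_n)\eta-r_n^2}{\eta^2(1+r_n)}\cdot\frac{1-\eta}{2+4\varepsilon^2h^{-2}}\quad\text{for } n\ge1.$$ Then $$\big\|u(\mathbf{x}_h,t_n)-u_h^n\big\|_\infty\le\frac{C_ut_n}{1-\eta}\exp\Big(\frac{4t_n}{1-\eta}\Big)(\tau^2+h^2)\qquad\text{for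 }1\le n\le N,$$ where $C_u$ is a constant independent of the time-step sizes and time-step ratios. *)

theory Defs
  imports "HOL-Analysis.Analysis"
begin

fun Ck :: "nat \<Rightarrow> ('a::euclidean_space \<Rightarrow> real) \<Rightarrow> bool" where
  "Ck 0 f = continuous_on UNIV f"
| "Ck (Suc k) f = (\<exists>f'. (\<forall>x. (f has_derivative f' x) (at x)) \<and> (\<forall>v. Ck k (\<lambda>x. f' x v)))"

definition smooth_fun :: "('a::euclidean_space \<Rightarrow> real) \<Rightarrow> bool" where
  "smooth_fun f = (\<forall>k. Ck k f)"

definition dt :: "(real \<times> real \<times> real \<Rightarrow> real) \<Rightarrow> real \<Rightarrow> real \<Rightarrow> real \<Rightarrow> real" where
  "dt u x y t = deriv (\<lambda>s. u (x, y, s)) t"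
definition dxx :: "(real \<times> real \<times> real \<Rightarrow> real) \<Rightarrow> real \<Rightarrow> real \<Rightarrow> real \<Rightarrow> real" where
  "dxx u x y t = deriv (\<lambda>s. deriv (\<lambda>r. u (r, y, t)) s) x"
definition dyy :: "(real \<times> real \<times> real \<Rightarrow> real) \<Rightarrow> real \<Rightarrow> real \<Rightarrow> real \<Rightarrow> real" where
  "dyy u x y t = deriv (\<lambda>s. deriv (\<lambda>r. u (x, r, t)) s) y"

definition fAC :: "real \<Rightarrow> real" where
  "fAC v = v ^ 3 - v"

definition ip :: "nat \<Rightarrow> nat \<Rightarrow> nat" where
  "ip M i = (if i = M then 1 else i + 1)"
definition im :: "nat \<Rightarrow> nat \<Rightarrow> nat" where
  "im M i = (if i = 1 then M else i - 1)"

text \<open>Five-point discrete Laplacian on the periodic grid {(ih,jh) : 1 \<le> i,j \<le> M}, h = L/M;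
  grid functions are V :: nat \<Rightarrow> nat \<Rightarrow> real, only values on {1..M}^2 matter.\<close>
definition lap_h :: "real \<Rightarrow> nat \<Rightarrow> (nat \<Rightarrow> nat \<Rightarrow> real) \<Rightarrow> nat \<Rightarrow> nat \<Rightarrow> real" where
  "lap_h h M V i j =
     (V (ip M i) j + V (im M i) j + V i (ip M j) + V i (im M j) - 4 * V i j) / h ^ 2"

definition grid_maxnorm :: "nat \<Rightarrow> (nat \<Rightarrow> nat \<Rightarrow> real) \<Rightarrow> real" where
  "grid_maxnorm M V = Max {\<bar>V i j\<bar> | i j. i \<in> {1..M} \<and> j \<in> {1..M}}"

definition tau :: "(nat \<Rightarrow> real) \<Rightarrow> nat \<Rightarrow> real" where
  "tau t k = t k - t (k - 1)"
definition tau_max :: "(nat \<Rightarrow> real) \<Rightarrow> nat \<Rightarrow> real" where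
  "tau_max t N = Max (tau t ` {1..N})"
definition ratio :: "(nat \<Rightarrow> real) \<Rightarrow> nat \<Rightarrow> real" where
  "ratio t k = (if k \<le> 1 then 0 else tau t k / tau t (k - 1))"

definition D2 :: "(nat \<Rightarrow> real) \<Rightarrow> (nat \<Rightarrow> nat \<Rightarrow> nat \<Rightarrow> real) \<Rightarrow> nat \<Rightarrow> nat \<Rightarrow> nat \<Rightarrow> real" where
  "D2 t U n i j =
     (if n = 1 then (U 1 i j - U 0 i j) / tau t 1
      else (1 + 2 * ratio t n) / (tau t n * (1 + ratio t n)) * (U n i j - U (n - 1) i j)
         - (ratio t n) ^ 2 / (tau t n * (1 + ratio t n)) * (U (n - 1) i j - U (n - 2) i j))"

end

theory Submission
  imports Defs
begin

lemma Ck_cont: "Ck k f \<Longrightarrow> continuous_on UNIV f"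
proof (induction k arbitrary: f)
  case 0 then show ?case by simp
next
  case (Suc k)
  then obtain f' where "\<forall>x. (f has_derivative f' x) (at x)" by auto
  then show ?case
    by (meson continuous_at_imp_continuous_on has_derivative_continuous)
qed

lemma Ck_dir:
  assumes "Ck (Suc k) f"
  shows "\<exists>g. Ck k g \<and> (\<forall>p s. ((\<lambda>s. f (p + s *\<^sub>R v)) has_real_derivative g (p + s *\<^sub>R v)) (at s))"
proof -
  obtain f' where d: "\<forall>x. (f has_derivative f' x) (at x)" and c: "\<forall>v. Ck k (\<lambda>x. f' x v)"
    using assms by auto
  have "((\<lambda>s. f (p + s *\<^sub>R v)) has_real_derivative f' (p + s *\<^sub>R v) v) (at s)" for p s
  proof -
    have l: "((\<lambda>s. p + s *\<^sub>R v) has_derivative (\<lambda>h. h *\<^sub>R v)) (at s)"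
      by (auto intro!: derivative_eq_intros)
    have "((\<lambda>s. f (p + s *\<^sub>R v)) has_derivative (\<lambda>h. f' (p + s *\<^sub>R v) (h *\<^sub>R v))) (at s)"
      using diff_chain_at[OF l d[rule_format]] by (simp add: o_def)
    moreover have "bounded_linear (f' (p + s *\<^sub>R v))" using d has_derivative_bounded_linear by blast
    then have "(\<lambda>h. f' (p + s *\<^sub>R v) (h *\<^sub>R v)) = (\<lambda>h. h * f' (p + s *\<^sub>R v) v)"
      by (simp add: linear_simps(5) bounded_linear.linear)
    ultimately have "((\<lambda>s. f (p + s *\<^sub>R v)) has_derivative (\<lambda>h. h * f' (p + s *\<^sub>R v) v)) (at s)" by simp
    then show ?thesis by (rule has_derivative_imp_has_field_derivative) simp
  qed
  then show ?thesis using c by blast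
qed

lemma Ck_dx:
  fixes f :: "real \<times> real \<times> real \<Rightarrow> real"
  assumes "Ck (Suc k) f"
  shows "\<exists>g. Ck k g \<and> (\<forall>x y t. ((\<lambda>r. f (r, y, t)) has_real_derivative g (x, y, t)) (at x))"
proof -
  obtain g where g: "Ck k g" "\<forall>p s. ((\<lambda>s. f (p + s *\<^sub>R (1,0,0))) has_real_derivative g (p + s *\<^sub>R (1,0,0))) (at s)"
    using Ck_dir[OF assms] by blast
  have "((\<lambda>r. f (r, y, t)) has_real_derivative g (x, y, t)) (at x)" for x y t
    using g(2)[rule_format, of "(0,y,t)" x] by simp
  with g show ?thesis by blast
qed

lemma Ck_dy:
  fixes f :: "real \<times> real \<times> real \<Rightarrow> real"
  assumes "Ck (Suc k) f"
  shows "\<exists>g. Ck k g \<and> (\<forall>x y t. ((\<lambda>r. f (x, r, t)) has_real_derivative g (x, y, t)) (at y))"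
proof -
  obtain g where g: "Ck k g" "\<forall>p s. ((\<lambda>s. f (p + s *\<^sub>R (0,1,0))) has_real_derivative g (p + s *\<^sub>R (0,1,0))) (at s)"
    using Ck_dir[OF assms] by blast
  have "((\<lambda>r. f (x, r, t)) has_real_derivative g (x, y, t)) (at y)" for x y t
    using g(2)[rule_format, of "(x,0,t)" y] by simp
  with g show ?thesis by blast
qed

lemma Ck_dt:
  fixes f :: "real \<times> real \<times> real \<Rightarrow> real"
  assumes "Ck (Suc k) f"
  shows "\<exists>g. Ck k g \<and> (\<forall>x y t. ((\<lambda>r. f (x, y, r)) has_real_derivative g (x, y, t)) (at t))"
proof -
  obtain g where g: "Ck k g" "\<forall>p s. ((\<lambda>s. f (p + s *\<^sub>R (0,0,1))) has_real_derivative g (p + s *\<^sub>R (0,0,1))) (at s)"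
    using Ck_dir[OF assms] by blast
  have "((\<lambda>r. f (x, y, r)) has_real_derivative g (x, y, t)) (at t)" for x y t
    using g(2)[rule_format, of "(x,y,0)" t] by simp
  with g show ?thesis by blast
qed

lemma second_deriv_max:
  fixes \<phi> \<phi>1 \<phi>2 :: "real \<Rightarrow> real"
  assumes d1: "\<And>x. (\<phi> has_real_derivative \<phi>1 x) (at x)"
    and d2: "\<And>x. (\<phi>1 has_real_derivative \<phi>2 x) (at x)"
    and mx: "\<And>x. \<phi> x \<le> \<phi> x0"
  shows "\<phi>2 x0 \<le> 0"
proof (rule ccontr)
  assume "\<not> \<phi>2 x0 \<le> 0"
  then have pos: "\<phi>2 x0 > 0" by simp
  have z: "\<phi>1 x0 = 0"
    using DERIV_local_max[OF d1[of x0], of 1] mx by auto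
  obtain d where d: "0 < d" "\<forall>h>0. h < d \<longrightarrow> \<phi>1 x0 < \<phi>1 (x0 + h)"
    using DERIV_pos_inc_right[OF d2[of x0] pos] by blast
  define h where "h = d / 2"
  have hh: "0 < h" "h < d" using d by (auto simp: h_def)
  obtain z where zz: "x0 < z" "z < x0 + h" "\<phi> (x0 + h) - \<phi> x0 = (x0 + h - x0) * \<phi>1 z"
    using MVT2[of x0 "x0 + h" \<phi> \<phi>1] hh d1 by auto
  have "\<phi>1 z > 0" using d(2)[rule_format, of "z - x0"] zz hh z by auto
  then have "h * \<phi>1 z > 0" using hh(1) by simp
  then have "\<phi> (x0 + h) > \<phi> x0" using zz(3) by simp
  with mx show False by (meson not_le)
qed

lemma per_int_x:
  fixes w :: "real \<times> real \<times> real \<Rightarrow> real"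
  assumes per: "\<And>x y s. w (x + L, y, s) = w (x, y, s)"
  shows "w (x + real_of_int k * L, y, s) = w (x, y, s)"
proof -
  have nat: "w (z + real n * L, y, s) = w (z, y, s)" for n :: nat and z
  proof (induction n)
    case (Suc n)
    have e: "z + real (Suc n) * L = (z + real n * L) + L" by (simp add: algebra_simps)
    show ?case unfolding e per Suc.IH ..
  qed simp
  show ?thesis
  proof (cases "k \<ge> 0")
    case True
    then show ?thesis using nat[of x "nat k"] by simp
  next
    case False
    define n where "n = nat (- k)"
    have "k = - int n" using False by (simp add: n_def)
    then show ?thesis using nat[of "x - real n * L" n] by simp
  qed
qed

lemma per_int_y:
  fixes w :: "real \<times> real \<times> real \<Rightarrow> real"
  assumes per: "\<And>x y s. w (x, y + L, s) = w (x, y, s)"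
  shows "w (x, y + real_of_int k * L, s) = w (x, y, s)"
proof -
  have nat: "w (x, z + real n * L, s) = w (x, z, s)" for n :: nat and z
  proof (induction n)
    case (Suc n)
    have e: "z + real (Suc n) * L = (z + real n * L) + L" by (simp add: algebra_simps)
    show ?case unfolding e per Suc.IH ..
  qed simp
  show ?thesis
  proof (cases "k \<ge> 0")
    case True
    then show ?thesis using nat[of y "nat k"] by simp
  next
    case False
    define n where "n = nat (- k)"
    have "k = - int n" using False by (simp add: n_def)
    then show ?thesis using nat[of "y - real n * L" n] by simp
  qed
qed

lemma per_reduce:
  fixes w :: "real \<times> real \<times> real \<Rightarrow> real"
  assumes L: "L > 0"
    and per_x: "\<And>x y s. w (x + L, y, s) = w (x, y, s)"
    and per_y: "\<And>x y s. w (x, y + L, s) = w (x, y, s)"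
  shows "\<exists>x'\<in>{0..L}. \<exists>y'\<in>{0..L}. w (x, y, s) = w (x', y', s)"
proof -
  define x' where "x' = x - real_of_int \<lfloor>x / L\<rfloor> * L"
  define y' where "y' = y - real_of_int \<lfloor>y / L\<rfloor> * L"
  have x'r: "0 \<le> x'" "x' \<le> L"
  proof -
    have a: "real_of_int \<lfloor>x / L\<rfloor> * L \<le> x" by (rule floor_divide_lower[OF L])
    have b: "x < (real_of_int \<lfloor>x / L\<rfloor> + 1) * L" by (rule floor_divide_upper[OF L])
    show "0 \<le> x'" using a unfolding x'_def by linarith
    show "x' \<le> L" using b unfolding x'_def distrib_right by linarith
  qed
  have y'r: "0 \<le> y'" "y' \<le> L"
  proof -
    have a: "real_of_int \<lfloor>y / L\<rfloor> * L \<le> y" by (rule floor_divide_lower[OF L])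
    have b: "y < (real_of_int \<lfloor>y / L\<rfloor> + 1) * L" by (rule floor_divide_upper[OF L])
    show "0 \<le> y'" using a unfolding y'_def by linarith
    show "y' \<le> L" using b unfolding y'_def distrib_right by linarith
  qed
  have "w (x, y, s) = w (x' + real_of_int \<lfloor>x / L\<rfloor> * L, y' + real_of_int \<lfloor>y / L\<rfloor> * L, s)"
    by (simp add: x'_def y'_def)
  also have "\<dots> = w (x', y' + real_of_int \<lfloor>y / L\<rfloor> * L, s)" by (rule per_int_x[OF per_x])
  also have "\<dots> = w (x', y', s)" by (rule per_int_y[OF per_y])
  finally show ?thesis using x'r y'r by (metis atLeastAtMost_iff)
qed

lemma cont_mbp:
  fixes w wt wx wxx wy wyy :: "real \<times> real \<times> real \<Rightarrow> real" and L T \<epsilon> :: real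
  assumes L: "L > 0"
    and cont: "continuous_on UNIV w"
    and per_x: "\<And>x y s. w (x + L, y, s) = w (x, y, s)"
    and per_y: "\<And>x y s. w (x, y + L, s) = w (x, y, s)"
    and dt: "\<And>x y t. ((\<lambda>s. w (x, y, s)) has_real_derivative wt (x, y, t)) (at t)"
    and dx: "\<And>x y t. ((\<lambda>r. w (r, y, t)) has_real_derivative wx (x, y, t)) (at x)"
    and dxx: "\<And>x y t. ((\<lambda>r. wx (r, y, t)) has_real_derivative wxx (x, y, t)) (at x)"
    and dy: "\<And>x y t. ((\<lambda>r. w (x, r, t)) has_real_derivative wy (x, y, t)) (at y)"
    and dyy: "\<And>x y t. ((\<lambda>r. wy (x, r, t)) has_real_derivative wyy (x, y, t)) (at y)"
    and pde: "\<And>x y s. 0 < s \<Longrightarrow> s \<le> T \<Longrightarrow>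
               wt (x, y, s) = \<epsilon>\<^sup>2 * (wxx (x, y, s) + wyy (x, y, s)) - fAC (w (x, y, s))"
    and init: "\<And>x y. w (x, y, 0) \<le> 1"
  assumes t: "0 \<le> t" "t \<le> T"
  shows "w (x, y, t) \<le> 1"
proof -
  have delta: "w (x, y, t) < 1 + \<delta> * (1 + t)" if \<delta>: "\<delta> > 0" and t: "0 \<le> t" "t \<le> T" for \<delta> x y t
  proof -
    define Sq where "Sq = {0..L} \<times> {0..L} \<times> {0..T}"
    define A where "A = Sq \<inter> {p. 1 + \<delta> * (1 + snd (snd p)) \<le> w p}"
    have "closed {p. 1 + \<delta> * (1 + snd (snd p)) \<le> w p}"
      by (intro closed_Collect_le continuous_intros cont)
    moreover have "compact Sq" unfolding Sq_def by (intro compact_Times compact_Icc)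
    ultimately have cA: "compact A" unfolding A_def by (simp add: compact_Int_closed)
    show ?thesis
    proof (rule ccontr)
      assume neg: "\<not> ?thesis"
      obtain x' y' where xy': "x' \<in> {0..L}" "y' \<in> {0..L}" "w (x, y, t) = w (x', y', t)"
        using per_reduce[OF L per_x per_y] by blast
      have "(x', y', t) \<in> A" using neg xy' t unfolding A_def Sq_def by auto
      then have ne: "(\<lambda>p. snd (snd p)) ` A \<noteq> {}" by blast
      have cS: "compact ((\<lambda>p. snd (snd p)) ` A)"
        by (intro compact_continuous_image cA continuous_intros)
      obtain ts where ts: "ts \<in> (\<lambda>p. snd (snd p)) ` A" "\<And>s. s \<in> (\<lambda>p. snd (snd p)) ` A \<Longrightarrow> ts \<le> s"
        using compact_attains_inf[OF cS ne] by blast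
      then obtain x1 y1 where p1: "(x1, y1, ts) \<in> A" by force
      then have ts_rng: "0 \<le> ts" "ts \<le> T" and big1: "1 + \<delta> * (1 + ts) \<le> w (x1, y1, ts)"
        unfolding A_def Sq_def by auto
      have cq: "compact ({0..L} \<times> {0..L} :: (real \<times> real) set)" by (intro compact_Times compact_Icc)
      have ccq: "continuous_on ({0..L} \<times> {0..L}) (\<lambda>q. w (fst q, snd q, ts))"
      proof -
        have "continuous_on UNIV (\<lambda>q::real\<times>real. (fst q, snd q, ts))"
          by (intro continuous_intros)
        then have "continuous_on UNIV (\<lambda>q::real\<times>real. w (fst q, snd q, ts))"
          using continuous_on_compose2[OF cont] by blast
        then show ?thesis by (rule continuous_on_subset) simp
      qed
      have neq: "({0..L} \<times> {0..L} :: (real \<times> real) set) \<noteq> {}" using L by simp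
      obtain q where q: "q \<in> {0..L} \<times> {0..L}"
        "\<And>q'. q' \<in> {0..L} \<times> {0..L} \<Longrightarrow> w (fst q', snd q', ts) \<le> w (fst q, snd q, ts)"
        using continuous_attains_sup[OF cq neq ccq] by blast
      define xs where "xs = fst q"
      define ys where "ys = snd q"
      have xsr: "xs \<in> {0..L}" "ys \<in> {0..L}" using q(1) by (auto simp: xs_def ys_def mem_Times_iff)
      have gmax: "w (x2, y2, ts) \<le> w (xs, ys, ts)" for x2 y2
      proof -
        obtain x3 y3 where "x3 \<in> {0..L}" "y3 \<in> {0..L}" "w (x2, y2, ts) = w (x3, y3, ts)"
          using per_reduce[OF L per_x per_y] by blast
        then show ?thesis using q(2)[of "(x3, y3)"] by (simp add: xs_def ys_def)
      qed
      have big: "1 + \<delta> * (1 + ts) \<le> w (xs, ys, ts)" using big1 gmax[of x1 y1] by linarith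
      have ts0: "ts > 0"
      proof (rule ccontr)
        assume "\<not> ts > 0"
        then have "ts = 0" using ts_rng by simp
        then show False using big init[of xs ys] \<delta> by simp
      qed
      have before: "w (xs, ys, s) < 1 + \<delta> * (1 + s)" if "0 \<le> s" "s < ts" for s
      proof (rule ccontr)
        assume "\<not> ?thesis"
        then have "(xs, ys, s) \<in> A" using that xsr ts_rng unfolding A_def Sq_def by auto
        then have "ts \<le> s" using ts(2)[of s] by force
        then show False using that by simp
      qed
      have wt_pos: "wt (xs, ys, ts) \<ge> \<delta>"
      proof (rule ccontr)
        assume "\<not> ?thesis"
        then have neg: "wt (xs, ys, ts) - \<delta> < 0" by simp
        have "((\<lambda>s. w (xs, ys, s) - \<delta> * (1 + s)) has_real_derivative wt (xs, ys, ts) - \<delta>) (at ts)"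
          using dt[of xs ys ts] by (auto intro!: derivative_eq_intros)
        from DERIV_neg_dec_left[OF this neg] obtain d where d: "d > 0"
          "\<And>h. h > 0 \<Longrightarrow> h < d \<Longrightarrow> w (xs, ys, ts) - \<delta> * (1 + ts) < w (xs, ys, ts - h) - \<delta> * (1 + (ts - h))"
          by blast
        define h where "h = min (d / 2) (ts / 2)"
        have h: "h > 0" "h < d" "h \<le> ts / 2" using d ts0 by (auto simp: h_def)
        have "w (xs, ys, ts - h) < 1 + \<delta> * (1 + (ts - h))" using before[of "ts - h"] h by simp
        then show False using d(2)[OF h(1,2)] big by linarith
      qed
      have wxx_le: "wxx (xs, ys, ts) \<le> 0"
        by (rule second_deriv_max[of "\<lambda>r. w (r, ys, ts)" "\<lambda>r. wx (r, ys, ts)" "\<lambda>r. wxx (r, ys, ts)"]) (use dx dxx gmax in auto)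
      have wyy_le: "wyy (xs, ys, ts) \<le> 0"
        by (rule second_deriv_max[of "\<lambda>r. w (xs, r, ts)" "\<lambda>r. wy (xs, r, ts)" "\<lambda>r. wyy (xs, r, ts)"]) (use dy dyy gmax in auto)
      have "\<delta> * (1 + ts) > 0" using \<delta> ts_rng by simp
      then have wbig: "w (xs, ys, ts) > 1" using big by linarith
      have "fAC (w (xs, ys, ts)) > 0"
      proof -
        let ?v = "w (xs, ys, ts)"
        have "?v * ?v > 1" using less_1_mult[OF wbig wbig] by simp
        then have "?v * (?v * ?v - 1) > 0" using wbig by simp
        then show ?thesis by (simp add: fAC_def power3_eq_cube algebra_simps)
      qed
      moreover have "\<epsilon>\<^sup>2 * (wxx (xs, ys, ts) + wyy (xs, ys, ts)) \<le> 0"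
        using wxx_le wyy_le by (simp add: mult_nonneg_nonpos)
      ultimately have "wt (xs, ys, ts) < 0" using pde[OF ts0 ts_rng(2), of xs ys] by linarith
      then show False using wt_pos \<delta> by linarith
    qed
  qed
  show ?thesis
  proof (rule ccontr)
    assume "\<not> ?thesis"
    then have g: "w (x, y, t) > 1" by simp
    define \<delta> where "\<delta> = (w (x, y, t) - 1) / (2 * (1 + t))"
    have dpos: "\<delta> > 0" using g t by (simp add: \<delta>_def)
    have eq: "\<delta> * (1 + t) = (w (x, y, t) - 1) / 2" using t by (simp add: \<delta>_def field_simps)
    have "w (x, y, t) < 1 + (w (x, y, t) - 1) / 2" using delta[OF dpos t, of x y] unfolding eq .
    then show False using g by (simp add: field_simps)
  qed
qed

lemma ip_range: "M \<ge> 1 \<Longrightarrow> i \<in> {1..M} \<Longrightarrow> ip M i \<in> {1..M}"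
  by (auto simp: ip_def)
lemma im_range: "M \<ge> 1 \<Longrightarrow> i \<in> {1..M} \<Longrightarrow> im M i \<in> {1..M}"
  by (auto simp: im_def)

lemma grid_set_eq: "{\<bar>V i j\<bar> | i j. i \<in> {1..M} \<and> j \<in> {1..M}} = (\<lambda>(i,j). \<bar>V i j\<bar>) ` ({1..M} \<times> {1..M})"
  by force

lemma grid_le_norm:
  assumes "i \<in> {1..M}" "j \<in> {1..M}"
  shows "\<bar>V i j\<bar> \<le> grid_maxnorm M V"
  unfolding grid_maxnorm_def grid_set_eq using assms
  by (intro Max_ge) auto

lemma grid_norm_nonneg:
  assumes "M \<ge> 1"
  shows "0 \<le> grid_maxnorm M V"
  using grid_le_norm[of 1 M 1 V] assms by auto

lemma grid_norm_attained:
  assumes "M \<ge> 1"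
  shows "\<exists>i\<in>{1..M}. \<exists>j\<in>{1..M}. grid_maxnorm M V = \<bar>V i j\<bar>"
proof -
  have "Max ((\<lambda>(i,j). \<bar>V i j\<bar>) ` ({1..M} \<times> {1..M})) \<in> (\<lambda>(i,j). \<bar>V i j\<bar>) ` ({1..M} \<times> {1..M})"
    using assms by (intro Max_in) auto
  then show ?thesis unfolding grid_maxnorm_def grid_set_eq by auto
qed

lemma grid_norm_le:
  assumes "M \<ge> 1" "\<And>i j. i \<in> {1..M} \<Longrightarrow> j \<in> {1..M} \<Longrightarrow> \<bar>V i j\<bar> \<le> B"
  shows "grid_maxnorm M V \<le> B"
  using grid_norm_attained[OF assms(1), of V] assms(2) by auto

lemma grid_argmax:
  fixes M :: nat and V :: "nat \<Rightarrow> nat \<Rightarrow> real"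
  assumes "M \<ge> 1"
  shows "\<exists>i\<in>{1..M}. \<exists>j\<in>{1..M}. \<forall>i'\<in>{1..M}. \<forall>j'\<in>{1..M}. V i' j' \<le> V i j"
proof -
  let ?S = "(\<lambda>(i,j). V i j) ` ({1..M} \<times> {1..M})"
  have fin: "finite ?S" by (intro finite_imageI finite_cartesian_product) auto
  have ne: "?S \<noteq> {}" using assms by force
  have "Max ?S \<in> ?S" using Max_in[OF fin ne] .
  then obtain i j where ij: "i \<in> {1..M}" "j \<in> {1..M}" "Max ?S = V i j" by auto
  have "V i' j' \<le> V i j" if "i' \<in> {1..M}" "j' \<in> {1..M}" for i' j'
  proof -
    have "V i' j' \<in> ?S" using that by force
    then show ?thesis using Max_ge[OF fin] ij(3) by metis
  qed
  then show ?thesis using ij by blast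
qed

lemma lap_neg: "lap_h h M (\<lambda>i j. - V i j) i j = - lap_h h M V i j"
  unfolding lap_h_def minus_divide_left by (rule arg_cong[where f="\<lambda>z. z / h^2"]) simp

lemma fAC_neg: "fAC (- v) = - fAC v"
  by (simp add: fAC_def)

lemma mbp_scalar:
  fixes a b c \<eta> k p qv x w :: real
  assumes eta: "0 < \<eta>" "\<eta> < 1" and a: "a > 1" and b: "b \<ge> 0"
    and c: "c = (1 - \<eta>) * (a - b / \<eta>)" "c \<ge> \<eta> * (2 + 4 * k)" and k: "k \<ge> 0"
    and p: "-1 \<le> p" "p \<le> 1" and q: "p - \<eta> * qv \<le> 1 - \<eta>" and x: "x = w + \<eta> * p"
    and ineq: "a * (x - p) - b * (p - qv) \<le> 4 * k * \<eta> * (1 - p) - (x ^ 3 - x)"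
  shows "w \<le> 1 - \<eta>"
proof (rule ccontr)
  assume nt: "\<not> w \<le> 1 - \<eta>"
  define \<delta> where "\<delta> = w - (1 - \<eta>)"
  have dpos: "\<delta> > 0" using nt by (simp add: \<delta>_def)
  have qv: "qv \<ge> (p - (1 - \<eta>)) / \<eta>" using q eta by (simp add: field_simps)
  have h1: "b * qv \<ge> b * ((p - (1 - \<eta>)) / \<eta>)" using mult_left_mono[OF qv b] .
  have id: "a * (x - p) - b * p + b * ((p - (1 - \<eta>)) / \<eta>) = a * \<delta> + c * (1 - p)"
    using eta unfolding c(1) x \<delta>_def by (simp add: field_simps)
  have h2: "a * \<delta> + c * (1 - p) \<le> 4 * k * \<eta> * (1 - p) - (x ^ 3 - x)"
    using ineq h1 id by (simp add: algebra_simps)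
  have h3: "(c - 4 * k * \<eta>) * (1 - p) \<ge> 2 * \<eta> * (1 - p)"
    using c(2) p by (intro mult_right_mono) (auto simp: algebra_simps)
  define y where "y = \<eta> * (1 - p)"
  have y2: "y \<le> 2 * \<eta>" using mult_left_mono[of "1 - p" 2 \<eta>] eta p by (simp add: y_def mult.commute)
  have y0: "0 \<le> y" using eta p by (simp add: y_def)
  have y: "0 \<le> y" "y \<le> 2" using y0 y2 eta by linarith+
  have xe: "x = (1 - y) + \<delta>" by (simp add: x \<delta>_def y_def algebra_simps)
  have g0: "(1 - y) - (1 - y) ^ 3 \<le> 2 * y"
  proof -
    have "(1 - y) - (1 - y) ^ 3 = y * ((1 - y) * (2 - y))" by (simp add: power3_eq_cube algebra_simps)
    moreover have "(1 - y) * (2 - y) \<le> 2"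
    proof -
      have "y * y \<le> 2 * y" using mult_right_mono[of y 2 y] y by simp
      moreover have "(1 - y) * (2 - y) = 2 - 3 * y + y * y" by (simp add: algebra_simps)
      ultimately show ?thesis using y by linarith
    qed
    ultimately show ?thesis using y by (metis mult_left_mono mult.commute mult_1)
  qed
  have gdiff: "(x - x ^ 3) - ((1 - y) - (1 - y) ^ 3) \<le> \<delta>"
  proof -
    define S where "S = x * x + x * (1 - y) + (1 - y) * (1 - y)"
    have eq: "(x - x ^ 3) - ((1 - y) - (1 - y) ^ 3) = \<delta> * (1 - S)"
      unfolding xe S_def by (simp add: power3_eq_cube algebra_simps)
    have "S = (x + (1 - y) / 2)^2 + 3/4 * (1 - y)^2"
      unfolding S_def by (simp add: power2_eq_square field_simps)
    then have "S \<ge> 0" by simp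
    then have "\<delta> * S \<ge> 0" using dpos by simp
    then have "\<delta> * (1 - S) \<le> \<delta>" by (simp add: right_diff_distrib)
    then show ?thesis using eq by simp
  qed
  have "a * \<delta> \<le> \<delta>"
    using h2 h3 g0 gdiff y2 by (simp add: algebra_simps y_def) 
  then show False using a dpos by (simp add: mult_le_cancel_right1)
qed

lemma err_scalar:
  fixes a b c \<eta> k qq x e1 e0 m sV s1 r N1 NV1 NR :: real
  assumes eta: "0 < \<eta>" "\<eta> < 1" and a: "a > 1" and b: "b \<ge> 0"
    and c: "c = (1 - \<eta>) * (a - b / \<eta>)" "c \<ge> \<eta> * (2 + 4 * k)" and k: "k \<ge> 0"
    and qq: "0 \<le> qq" "qq \<le> 3" and m: "m \<ge> 0" and x: "x = m + \<eta> * e1"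
    and sV: "sV \<le> 4 * m" and e1: "e1 \<le> N1" "0 \<le> N1" and s1: "s1 \<le> 4 * N1"
    and v1: "e1 - \<eta> * e0 \<le> NV1" and r: "r \<le> NR"
    and eq: "a * (x - e1) - b * (e1 - e0) = k * ((sV + \<eta> * s1) - 4 * x) - (qq - 1) * x + r"
  shows "(a - 1) * m \<le> (c + \<eta>) * N1 + (b / \<eta>) * NV1 + NR"
proof -
  define D where "D = c + \<eta> - \<eta> * qq - 4 * k * \<eta>"
  have c': "c = a * (1 - \<eta>) + b - b / \<eta>" using eta unfolding c(1) by (simp add: field_simps)
  have "((a - 1 + qq) * m + k * (4 * m - sV)) - (D * e1 + k * \<eta> * s1 + (b / \<eta>) * (e1 - \<eta> * e0) + r)
      = (a * (x - e1) - b * (e1 - e0)) - (k * ((sV + \<eta> * s1) - 4 * x) - (qq - 1) * x + r)"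
    unfolding D_def c' x using eta by (simp add: algebra_simps)
  then have id: "(a - 1 + qq) * m + k * (4 * m - sV) = D * e1 + k * \<eta> * s1 + (b / \<eta>) * (e1 - \<eta> * e0) + r"
    using eq by simp
  have Dnn: "D \<ge> 0"
  proof -
    have "\<eta> * qq \<le> \<eta> * 3" using qq eta by simp
    then show ?thesis using c(2) unfolding D_def by (simp add: algebra_simps)
  qed
  have t1: "(a - 1) * m \<le> (a - 1 + qq) * m + k * (4 * m - sV)"
  proof -
    have "qq * m \<ge> 0" using qq m by simp
    moreover have "k * (4 * m - sV) \<ge> 0" using k sV by simp
    ultimately show ?thesis by (simp add: algebra_simps)
  qed
  have t2: "D * e1 \<le> D * N1" using Dnn e1 by (simp add: mult_left_mono)
  have t3: "k * \<eta> * s1 \<le> k * \<eta> * (4 * N1)" using k eta s1 by (simp add: mult_left_mono)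
  have t4: "(b / \<eta>) * (e1 - \<eta> * e0) \<le> (b / \<eta>) * NV1" using b eta v1 by (intro mult_left_mono) auto
  have t5: "\<eta> * qq * N1 \<ge> 0" using eta qq e1 by simp
  have "(a - 1) * m \<le> D * N1 + k * \<eta> * (4 * N1) + (b / \<eta>) * NV1 + NR"
    using t1 id t2 t3 t4 r by linarith
  also have "D * N1 + k * \<eta> * (4 * N1) = (c + \<eta>) * N1 - \<eta> * qq * N1"
    unfolding D_def by (simp add: algebra_simps)
  finally show ?thesis using t5 by linarith
qed

lemma lap_upper:
  assumes h: "h > 0"
    and "X (ip M i) j \<le> B" "X (im M i) j \<le> B" "X i (ip M j) \<le> B" "X i (im M j) \<le> B"
  shows "lap_h h M X i j \<le> (4 * B - 4 * X i j) / h ^ 2"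
  unfolding lap_h_def using assms by (intro divide_right_mono) auto

lemma mbp_grid_upper:
  fixes P Q X :: "nat \<Rightarrow> nat \<Rightarrow> real" and M :: nat
  assumes M: "M \<ge> 1" and h: "h > 0" and eta: "0 < \<eta>" "\<eta> < 1" and a: "a > 1" and b: "b \<ge> 0"
    and c: "c = (1 - \<eta>) * (a - b / \<eta>)" "c \<ge> \<eta> * (2 + 4 * (\<epsilon>\<^sup>2 / h\<^sup>2))"
    and Pb: "\<And>i j. i \<in> {1..M} \<Longrightarrow> j \<in> {1..M} \<Longrightarrow> \<bar>P i j\<bar> \<le> 1"
    and PQ: "\<And>i j. i \<in> {1..M} \<Longrightarrow> j \<in> {1..M} \<Longrightarrow> P i j - \<eta> * Q i j \<le> 1 - \<eta>"
    and sch: "\<And>i j. i \<in> {1..M} \<Longrightarrow> j \<in> {1..M} \<Longrightarrow>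
               a * (X i j - P i j) - b * (P i j - Q i j) = \<epsilon>\<^sup>2 * lap_h h M X i j - fAC (X i j)"
    and ij: "i \<in> {1..M}" "j \<in> {1..M}"
  shows "X i j - \<eta> * P i j \<le> 1 - \<eta>"
proof -
  obtain i0 j0 where ij0: "i0 \<in> {1..M}" "j0 \<in> {1..M}"
    and mx: "\<And>i' j'. i' \<in> {1..M} \<Longrightarrow> j' \<in> {1..M} \<Longrightarrow> X i' j' - \<eta> * P i' j' \<le> X i0 j0 - \<eta> * P i0 j0"
    using grid_argmax[OF M, of "\<lambda>i j. X i j - \<eta> * P i j"] by blast
  define w where "w = X i0 j0 - \<eta> * P i0 j0"
  define p where "p = P i0 j0"
  define x where "x = X i0 j0"
  have nb: "X i' j' \<le> w + \<eta>" if "i' \<in> {1..M}" "j' \<in> {1..M}" for i' j'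
  proof -
    have "P i' j' \<le> 1" using Pb[OF that] by simp
    then have "\<eta> * P i' j' \<le> \<eta>" using eta by simp
    then show ?thesis using mx[OF that] unfolding w_def by linarith
  qed
  have lap: "lap_h h M X i0 j0 \<le> (4 * (w + \<eta>) - 4 * X i0 j0) / h ^ 2"
    by (rule lap_upper[OF h]) (use nb ip_range[OF M] im_range[OF M] ij0 in auto)
  have "4 * (w + \<eta>) - 4 * X i0 j0 = 4 * \<eta> * (1 - p)" unfolding w_def p_def by (simp add: algebra_simps)
  with lap have l2: "lap_h h M X i0 j0 \<le> 4 * \<eta> * (1 - p) / h ^ 2" by simp
  have "\<epsilon>\<^sup>2 * lap_h h M X i0 j0 \<le> \<epsilon>\<^sup>2 * (4 * \<eta> * (1 - p) / h ^ 2)"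
    by (rule mult_left_mono[OF l2]) simp
  also have "\<dots> = 4 * (\<epsilon>\<^sup>2 / h\<^sup>2) * \<eta> * (1 - p)" by (simp add: field_simps)
  finally have le: "\<epsilon>\<^sup>2 * lap_h h M X i0 j0 \<le> 4 * (\<epsilon>\<^sup>2 / h\<^sup>2) * \<eta> * (1 - p)" .
  have ineq: "a * (x - p) - b * (p - Q i0 j0) \<le> 4 * (\<epsilon>\<^sup>2 / h\<^sup>2) * \<eta> * (1 - p) - (x ^ 3 - x)"
    using sch[OF ij0] le unfolding x_def p_def fAC_def by linarith
  have pr: "-1 \<le> p" "p \<le> 1" using Pb[OF ij0] unfolding p_def by auto
  have "w \<le> 1 - \<eta>"
    by (rule mbp_scalar[OF eta a b c _ pr PQ[OF ij0, folded p_def] _ ineq])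
       (auto simp: w_def x_def p_def)
  then show ?thesis using mx[OF ij] unfolding w_def by linarith
qed

lemma mbp_grid:
  fixes P Q X :: "nat \<Rightarrow> nat \<Rightarrow> real" and M :: nat
  assumes M: "M \<ge> 1" and h: "h > 0" and eta: "0 < \<eta>" "\<eta> < 1" and a: "a > 1" and b: "b \<ge> 0"
    and c: "c = (1 - \<eta>) * (a - b / \<eta>)" "c \<ge> \<eta> * (2 + 4 * (\<epsilon>\<^sup>2 / h\<^sup>2))"
    and Pb: "\<And>i j. i \<in> {1..M} \<Longrightarrow> j \<in> {1..M} \<Longrightarrow> \<bar>P i j\<bar> \<le> 1"
    and PQ: "\<And>i j. i \<in> {1..M} \<Longrightarrow> j \<in> {1..M} \<Longrightarrow> \<bar>P i j - \<eta> * Q i j\<bar> \<le> 1 - \<eta>"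
    and sch: "\<And>i j. i \<in> {1..M} \<Longrightarrow> j \<in> {1..M} \<Longrightarrow>
               a * (X i j - P i j) - b * (P i j - Q i j) = \<epsilon>\<^sup>2 * lap_h h M X i j - fAC (X i j)"
    and ij: "i \<in> {1..M}" "j \<in> {1..M}"
  shows "\<bar>X i j - \<eta> * P i j\<bar> \<le> 1 - \<eta>" "\<bar>X i j\<bar> \<le> 1"
proof -
  have PQ': "P i j - \<eta> * Q i j \<le> 1 - \<eta>" if "i \<in> {1..M}" "j \<in> {1..M}" for i j
    using PQ[OF that] by (simp add: abs_le_iff)
  have up: "X i j - \<eta> * P i j \<le> 1 - \<eta>"
    by (rule mbp_grid_upper[OF M h eta a b c Pb PQ' sch ij])
  have lo: "(- X i j) - \<eta> * (- P i j) \<le> 1 - \<eta>"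
  proof (rule mbp_grid_upper[where P="\<lambda>i j. - P i j" and Q="\<lambda>i j. - Q i j" and X="\<lambda>i j. - X i j",
        OF M h eta a b c _ _ _ ij])
    show "\<bar>- P i j\<bar> \<le> 1" if "i \<in> {1..M}" "j \<in> {1..M}" for i j using Pb[OF that] by simp
    show "- P i j - \<eta> * - Q i j \<le> 1 - \<eta>" if "i \<in> {1..M}" "j \<in> {1..M}" for i j
      using PQ[OF that] by (simp add: abs_le_iff algebra_simps)
    show "a * (- X i j - - P i j) - b * (- P i j - - Q i j) =
          \<epsilon>\<^sup>2 * lap_h h M (\<lambda>i j. - X i j) i j - fAC (- X i j)" if "i \<in> {1..M}" "j \<in> {1..M}" for i j
      using sch[OF that] by (simp add: lap_neg fAC_neg algebra_simps)
  qed
  show w: "\<bar>X i j - \<eta> * P i j\<bar> \<le> 1 - \<eta>" using up lo by (simp add: abs_le_iff algebra_simps)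
  have "\<bar>\<eta> * P i j\<bar> \<le> \<eta>" using Pb[OF ij] eta by (simp add: abs_mult)
  then show "\<bar>X i j\<bar> \<le> 1" using w by linarith
qed

lemma err_grid_upper:
  fixes Ea Eb Ec qg Rg :: "nat \<Rightarrow> nat \<Rightarrow> real" and M :: nat
  assumes M: "M \<ge> 1" and h: "h > 0" and eta: "0 < \<eta>" "\<eta> < 1" and a: "a > 1" and b: "b \<ge> 0"
    and c: "c = (1 - \<eta>) * (a - b / \<eta>)" "c \<ge> \<eta> * (2 + 4 * (\<epsilon>\<^sup>2 / h\<^sup>2))"
    and q: "\<And>i j. i \<in> {1..M} \<Longrightarrow> j \<in> {1..M} \<Longrightarrow> 0 \<le> qg i j \<and> qg i j \<le> 3"
    and eq: "\<And>i j. i \<in> {1..M} \<Longrightarrow> j \<in> {1..M} \<Longrightarrow>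
       a * (Ec i j - Eb i j) - b * (Eb i j - Ea i j) = \<epsilon>\<^sup>2 * lap_h h M Ec i j - (qg i j - 1) * Ec i j + Rg i j"
    and ij: "i \<in> {1..M}" "j \<in> {1..M}"
  shows "(a - 1) * (Ec i j - \<eta> * Eb i j) \<le> (c + \<eta>) * grid_maxnorm M Eb
           + (b / \<eta>) * grid_maxnorm M (\<lambda>i j. Eb i j - \<eta> * Ea i j) + grid_maxnorm M Rg"
proof -
  define V2 where "V2 = (\<lambda>i j. Ec i j - \<eta> * Eb i j)"
  obtain i0 j0 where ij0: "i0 \<in> {1..M}" "j0 \<in> {1..M}"
    and mx: "\<And>i' j'. i' \<in> {1..M} \<Longrightarrow> j' \<in> {1..M} \<Longrightarrow> V2 i' j' \<le> V2 i0 j0"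
    using grid_argmax[OF M, of V2] by blast
  define m where "m = V2 i0 j0"
  define N1 where "N1 = grid_maxnorm M Eb"
  define NV1 where "NV1 = grid_maxnorm M (\<lambda>i j. Eb i j - \<eta> * Ea i j)"
  define NR where "NR = grid_maxnorm M Rg"
  have N1: "N1 \<ge> 0" "NV1 \<ge> 0" "NR \<ge> 0" unfolding N1_def NV1_def NR_def using grid_norm_nonneg[OF M] by auto
  have cpos: "c \<ge> 0"
  proof -
    have "\<epsilon>\<^sup>2 / h\<^sup>2 \<ge> 0" by simp
    then show ?thesis using c(2) eta by (smt (verit) mult_nonneg_nonneg)
  qed
  have rhs_nn: "0 \<le> (c + \<eta>) * N1 + (b / \<eta>) * NV1 + NR"
    using N1 cpos eta b by (simp add: add_nonneg_nonneg)
  have main: "(a - 1) * m \<le> (c + \<eta>) * N1 + (b / \<eta>) * NV1 + NR"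
  proof (cases "m \<ge> 0")
    case False
    then have "(a - 1) * m \<le> 0" using a by (simp add: mult_nonneg_nonpos)
    then show ?thesis using rhs_nn by linarith
  next
    case True
    let ?nbs = "\<lambda>F. F (ip M i0) j0 + F (im M i0) j0 + F i0 (ip M j0) + F i0 (im M j0)"
    have nbr: "ip M i0 \<in> {1..M}" "im M i0 \<in> {1..M}" "ip M j0 \<in> {1..M}" "im M j0 \<in> {1..M}"
      using ip_range[OF M] im_range[OF M] ij0 by auto
    have sV: "?nbs V2 \<le> 4 * m" using mx nbr ij0 unfolding m_def by (smt (verit))
    have s1: "?nbs Eb \<le> 4 * N1"
      using grid_le_norm[of _ M _ Eb] nbr ij0 unfolding N1_def by (smt (verit))
    have e1: "Eb i0 j0 \<le> N1" using grid_le_norm[OF ij0, of Eb] unfolding N1_def by simp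
    have v1: "Eb i0 j0 - \<eta> * Ea i0 j0 \<le> NV1"
      using grid_le_norm[OF ij0, of "\<lambda>i j. Eb i j - \<eta> * Ea i j"] unfolding NV1_def by simp
    have r: "Rg i0 j0 \<le> NR" using grid_le_norm[OF ij0, of Rg] unfolding NR_def by simp
    have "lap_h h M Ec i0 j0 = ((?nbs V2 + \<eta> * ?nbs Eb) - 4 * Ec i0 j0) / h\<^sup>2"
      unfolding lap_h_def V2_def by (rule arg_cong[where f="\<lambda>z. z / h\<^sup>2"]) (simp add: algebra_simps)
    then have lapE: "\<epsilon>\<^sup>2 * lap_h h M Ec i0 j0 = (\<epsilon>\<^sup>2 / h\<^sup>2) * ((?nbs V2 + \<eta> * ?nbs Eb) - 4 * Ec i0 j0)"
      by simp
    have x: "Ec i0 j0 = m + \<eta> * Eb i0 j0" unfolding m_def V2_def by simp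
    show ?thesis
      unfolding N1_def[symmetric] NV1_def[symmetric] NR_def[symmetric]
      by (rule err_scalar[OF eta a b c _ q[OF ij0, THEN conjunct1] q[OF ij0, THEN conjunct2] True x sV e1 N1(1) s1 v1 r])
         (use eq[OF ij0] lapE in simp_all)
  qed
  have "(a - 1) * V2 i j \<le> (a - 1) * m" using mx[OF ij] a unfolding m_def by simp
  then show ?thesis using main unfolding V2_def N1_def NV1_def NR_def by linarith
qed

lemma taylor2_back:
  fixes \<phi> \<phi>1 \<phi>2 :: "real \<Rightarrow> real"
  assumes d1: "\<And>s. (\<phi> has_real_derivative \<phi>1 s) (at s)"
    and d2: "\<And>s. (\<phi>1 has_real_derivative \<phi>2 s) (at s)"
    and bnd: "\<And>s. t0 - \<tau> \<le> s \<Longrightarrow> s \<le> t0 \<Longrightarrow> \<bar>\<phi>2 s\<bar> \<le> K"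
    and tau: "\<tau> > 0"
  shows "\<bar>(\<phi> t0 - \<phi> (t0 - \<tau>)) / \<tau> - \<phi>1 t0\<bar> \<le> K * \<tau> / 2"
proof -
  define diff where "diff = (\<lambda>m::nat. if m = 0 then \<phi> else if m = 1 then \<phi>1 else \<phi>2)"
  have "\<exists>s. t0 - \<tau> < s \<and> s < t0 \<and>
    \<phi> (t0 - \<tau>) = (\<Sum>m<2. (diff m t0 / fact m) * ((t0 - \<tau>) - t0)^m) + (diff 2 s / fact 2) * ((t0 - \<tau>) - t0)^2"
    by (rule Taylor_down[where b = t0]) (use tau d1 d2 in \<open>auto simp: diff_def\<close>)
  then obtain s where s: "t0 - \<tau> < s" "s < t0"
    and eq: "\<phi> (t0 - \<tau>) = \<phi> t0 - \<tau> * \<phi>1 t0 + \<phi>2 s / 2 * \<tau>^2"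
    by (auto simp: diff_def eval_nat_numeral power2_eq_square)
  have "(\<phi> t0 - \<phi> (t0 - \<tau>)) / \<tau> - \<phi>1 t0 = - \<phi>2 s * \<tau> / 2"
    using tau unfolding eq by (simp add: field_simps power2_eq_square)
  moreover have "\<bar>\<phi>2 s\<bar> \<le> K" using bnd s by simp
  ultimately show ?thesis using tau by (simp add: abs_mult divide_right_mono mult_right_mono)
qed

lemma taylor3_rem:
  fixes \<phi> \<phi>1 \<phi>2 \<phi>3 :: "real \<Rightarrow> real"
  assumes d1: "\<And>s. (\<phi> has_real_derivative \<phi>1 s) (at s)"
    and d2: "\<And>s. (\<phi>1 has_real_derivative \<phi>2 s) (at s)"
    and d3: "\<And>s. (\<phi>2 has_real_derivative \<phi>3 s) (at s)"
    and bnd: "\<And>s. t0 - \<sigma> \<le> s \<Longrightarrow> s \<le> t0 \<Longrightarrow> \<bar>\<phi>3 s\<bar> \<le> K"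
    and sig: "\<sigma> > 0"
  shows "\<bar>\<phi> (t0 - \<sigma>) - \<phi> t0 + \<sigma> * \<phi>1 t0 - \<sigma>^2 / 2 * \<phi>2 t0\<bar> \<le> K * \<sigma>^3 / 6"
proof -
  define diff where "diff = (\<lambda>m::nat. if m = 0 then \<phi> else if m = 1 then \<phi>1 else if m = 2 then \<phi>2 else \<phi>3)"
  have "\<exists>s. t0 - \<sigma> < s \<and> s < t0 \<and>
    \<phi> (t0 - \<sigma>) = (\<Sum>m<3. (diff m t0 / fact m) * ((t0 - \<sigma>) - t0)^m) + (diff 3 s / fact 3) * ((t0 - \<sigma>) - t0)^3"
    by (rule Taylor_down[where b = t0]) (use sig d1 d2 d3 in \<open>auto simp: diff_def\<close>)
  then obtain s where s: "t0 - \<sigma> < s" "s < t0"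
    and eq: "\<phi> (t0 - \<sigma>) = \<phi> t0 - \<sigma> * \<phi>1 t0 + \<sigma>^2 / 2 * \<phi>2 t0 - \<phi>3 s / 6 * \<sigma>^3"
    by (auto simp: diff_def eval_nat_numeral power2_eq_square power3_eq_cube fact_numeral)
  have "\<phi> (t0 - \<sigma>) - \<phi> t0 + \<sigma> * \<phi>1 t0 - \<sigma>^2 / 2 * \<phi>2 t0 = - \<phi>3 s * \<sigma>^3 / 6"
    unfolding eq by (simp add: field_simps)
  moreover have "\<bar>\<phi>3 s\<bar> \<le> K" using bnd s by simp
  ultimately show ?thesis using sig by (simp add: abs_mult divide_right_mono mult_right_mono)
qed

lemma taylor4_sym:
  fixes \<phi> \<phi>1 \<phi>2 \<phi>3 \<phi>4 :: "real \<Rightarrow> real"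
  assumes d1: "\<And>s. (\<phi> has_real_derivative \<phi>1 s) (at s)"
    and d2: "\<And>s. (\<phi>1 has_real_derivative \<phi>2 s) (at s)"
    and d3: "\<And>s. (\<phi>2 has_real_derivative \<phi>3 s) (at s)"
    and d4: "\<And>s. (\<phi>3 has_real_derivative \<phi>4 s) (at s)"
    and bnd: "\<And>s. x - h \<le> s \<Longrightarrow> s \<le> x + h \<Longrightarrow> \<bar>\<phi>4 s\<bar> \<le> K"
    and h: "h > 0"
  shows "\<bar>\<phi> (x + h) + \<phi> (x - h) - 2 * \<phi> x - h^2 * \<phi>2 x\<bar> \<le> K * h^4 / 12"
proof -
  define diff where "diff = (\<lambda>m::nat. if m = 0 then \<phi> else if m = 1 then \<phi>1 else if m = 2 then \<phi>2
     else if m = 3 then \<phi>3 else \<phi>4)"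
  have "\<exists>s. x < s \<and> s < x + h \<and>
    \<phi> (x + h) = (\<Sum>m<4. (diff m x / fact m) * ((x + h) - x)^m) + (diff 4 s / fact 4) * ((x + h) - x)^4"
    by (rule Taylor_up[where a = x]) (use h d1 d2 d3 d4 in \<open>auto simp: diff_def\<close>)
  then obtain s1 where s1: "x < s1" "s1 < x + h"
    and raw: "\<phi> (x + h) = (\<Sum>m<4. (diff m x / fact m) * ((x + h) - x)^m) + (diff 4 s1 / fact 4) * ((x + h) - x)^4"
    by blast
  have eq1: "\<phi> (x + h) = \<phi> x + h * \<phi>1 x + h^2 / 2 * \<phi>2 x + h^3 / 6 * \<phi>3 x + \<phi>4 s1 / 24 * h^4"
    using raw by (simp add: diff_def eval_nat_numeral fact_numeral field_simps)
  have "\<exists>s. x - h < s \<and> s < x \<and>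
    \<phi> (x - h) = (\<Sum>m<4. (diff m x / fact m) * ((x - h) - x)^m) + (diff 4 s / fact 4) * ((x - h) - x)^4"
    by (rule Taylor_down[where b = x]) (use h d1 d2 d3 d4 in \<open>auto simp: diff_def\<close>)
  then obtain s2 where s2: "x - h < s2" "s2 < x"
    and raw: "\<phi> (x - h) = (\<Sum>m<4. (diff m x / fact m) * ((x - h) - x)^m) + (diff 4 s2 / fact 4) * ((x - h) - x)^4"
    by blast
  have eq2: "\<phi> (x - h) = \<phi> x - h * \<phi>1 x + h^2 / 2 * \<phi>2 x - h^3 / 6 * \<phi>3 x + \<phi>4 s2 / 24 * h^4"
    using raw by (simp add: diff_def eval_nat_numeral fact_numeral field_simps)
  have e: "\<phi> (x + h) + \<phi> (x - h) - 2 * \<phi> x - h^2 * \<phi>2 x = (\<phi>4 s1 + \<phi>4 s2) * (h^4 / 24)"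
    unfolding eq1 eq2 by (simp add: field_simps)
  have A: "\<bar>\<phi>4 s1 + \<phi>4 s2\<bar> \<le> 2 * K" using bnd s1 s2 by (smt (verit))
  have "\<bar>\<phi> (x + h) + \<phi> (x - h) - 2 * \<phi> x - h^2 * \<phi>2 x\<bar> = \<bar>\<phi>4 s1 + \<phi>4 s2\<bar> * (h^4 / 24)"
    unfolding e by (simp add: abs_mult)
  also have "\<dots> \<le> (2 * K) * (h^4 / 24)"
    using A h by (intro mult_right_mono) auto
  also have "\<dots> = K * h^4 / 12" by simp
  finally show ?thesis .
qed

lemma bdf2_coeffs:
  fixes \<tau> \<tau>' r :: real
  assumes pos: "\<tau> > 0" "\<tau>' > 0" "r > 0" and rt: "\<tau> = r * \<tau>'"
  shows "(1 + 2 * r) / (\<tau> * (1 + r)) * \<tau> - r^2 / (\<tau> * (1 + r)) * \<tau>' = 1"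
    "(1 + 2 * r) / (\<tau> * (1 + r)) * \<tau>^2 + r^2 / (\<tau> * (1 + r)) * \<tau>^2 - r^2 / (\<tau> * (1 + r)) * (\<tau> + \<tau>')^2 = 0"
    "((1 + 2 * r) / (\<tau> * (1 + r)) + r^2 / (\<tau> * (1 + r))) * \<tau>^3 = (1 + r) * \<tau>^2"
    "r^2 / (\<tau> * (1 + r)) * (\<tau> + \<tau>')^3 = \<tau> * \<tau>' * (1 + r)^2"
proof -
  have D: "\<tau> * (1 + r) \<noteq> 0" using pos by simp
  have nz: "\<tau>' \<noteq> 0" "r \<noteq> 0" "1 + r \<noteq> 0" using pos by auto
  show "(1 + 2 * r) / (\<tau> * (1 + r)) * \<tau> - r^2 / (\<tau> * (1 + r)) * \<tau>' = 1"
    apply (simp add: D divide_simps)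
    apply (simp add: rt nz algebra_simps power2_eq_square)
    done
  show "(1 + 2 * r) / (\<tau> * (1 + r)) * \<tau>^2 + r^2 / (\<tau> * (1 + r)) * \<tau>^2 - r^2 / (\<tau> * (1 + r)) * (\<tau> + \<tau>')^2 = 0"
    apply (simp add: D divide_simps)
    apply (simp add: rt nz algebra_simps power2_eq_square)
    done
  show "((1 + 2 * r) / (\<tau> * (1 + r)) + r^2 / (\<tau> * (1 + r))) * \<tau>^3 = (1 + r) * \<tau>^2"
    apply (simp add: D divide_simps)
    apply (simp add: rt nz algebra_simps power2_eq_square power3_eq_cube)
    done
  show "r^2 / (\<tau> * (1 + r)) * (\<tau> + \<tau>')^3 = \<tau> * \<tau>' * (1 + r)^2"
    apply (simp add: D divide_simps)
    apply (simp add: rt nz algebra_simps power2_eq_square power3_eq_cube)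
    done
qed

lemma bdf2_consist:
  fixes \<phi> \<phi>1 \<phi>2 \<phi>3 :: "real \<Rightarrow> real"
  assumes d1: "\<And>s. (\<phi> has_real_derivative \<phi>1 s) (at s)"
    and d2: "\<And>s. (\<phi>1 has_real_derivative \<phi>2 s) (at s)"
    and d3: "\<And>s. (\<phi>2 has_real_derivative \<phi>3 s) (at s)"
    and bnd: "\<And>s. t0 - (\<tau> + \<tau>') \<le> s \<Longrightarrow> s \<le> t0 \<Longrightarrow> \<bar>\<phi>3 s\<bar> \<le> K"
    and tau: "\<tau> > 0" "\<tau>' > 0" "\<tau> \<le> m" "\<tau>' \<le> m" and r3: "\<tau> / \<tau>' \<le> 3"
  shows "\<bar>(1 + 2 * (\<tau> / \<tau>')) / (\<tau> * (1 + \<tau> / \<tau>')) * (\<phi> t0 - \<phi> (t0 - \<tau>))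
          - (\<tau> / \<tau>')^2 / (\<tau> * (1 + \<tau> / \<tau>')) * (\<phi> (t0 - \<tau>) - \<phi> (t0 - (\<tau> + \<tau>'))) - \<phi>1 t0\<bar>
         \<le> 4 * K * m^2"
proof -
  define r where "r = \<tau> / \<tau>'"
  define a where "a = (1 + 2 * r) / (\<tau> * (1 + r))"
  define b where "b = r^2 / (\<tau> * (1 + r))"
  have r0: "r > 0" using tau by (simp add: r_def)
  have rt: "\<tau> = r * \<tau>'" using tau by (simp add: r_def)
  note co = bdf2_coeffs[OF tau(1) tau(2) r0 rt, folded a_def b_def]
  have a0: "a \<ge> 0" "b \<ge> 0" using r0 tau by (simp_all add: a_def b_def)
  define T1 where "T1 = \<phi> (t0 - \<tau>) - \<phi> t0 + \<tau> * \<phi>1 t0 - \<tau>^2 / 2 * \<phi>2 t0"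
  define T2 where "T2 = \<phi> (t0 - (\<tau> + \<tau>')) - \<phi> t0 + (\<tau> + \<tau>') * \<phi>1 t0 - (\<tau> + \<tau>')^2 / 2 * \<phi>2 t0"
  have K0: "K \<ge> 0" using bnd[of t0] tau by (smt (verit))
  have T1b: "\<bar>T1\<bar> \<le> K * \<tau>^3 / 6" unfolding T1_def
    by (rule taylor3_rem[OF d1 d2 d3 _ tau(1)]) (use bnd tau in auto)
  have T2b: "\<bar>T2\<bar> \<le> K * (\<tau> + \<tau>')^3 / 6" unfolding T2_def
    by (rule taylor3_rem[OF d1 d2 d3 bnd]) (use tau in auto)
  have "a * (\<phi> t0 - \<phi> (t0 - \<tau>)) - b * (\<phi> (t0 - \<tau>) - \<phi> (t0 - (\<tau> + \<tau>'))) - \<phi>1 t0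
      = (a * \<tau> - b * \<tau>' - 1) * \<phi>1 t0 - (a * \<tau>^2 + b * \<tau>^2 - b * (\<tau> + \<tau>')^2) / 2 * \<phi>2 t0
        - (a + b) * T1 + b * T2"
    unfolding T1_def T2_def by (simp add: field_simps power2_eq_square)
  also have "\<dots> = - (a + b) * T1 + b * T2" using co by simp (simp add: algebra_simps)
  finally have e: "a * (\<phi> t0 - \<phi> (t0 - \<tau>)) - b * (\<phi> (t0 - \<tau>) - \<phi> (t0 - (\<tau> + \<tau>'))) - \<phi>1 t0
      = - (a + b) * T1 + b * T2" .
  have "\<bar>- (a + b) * T1 + b * T2\<bar> \<le> \<bar>- (a + b) * T1\<bar> + \<bar>b * T2\<bar>" by (rule abs_triangle_ineq)
  also have "\<dots> = (a + b) * \<bar>T1\<bar> + b * \<bar>T2\<bar>" using a0 by (simp add: abs_mult)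
  also have "\<dots> \<le> (a + b) * (K * \<tau>^3 / 6) + b * (K * (\<tau> + \<tau>')^3 / 6)"
    using a0 T1b T2b by (intro add_mono mult_left_mono) auto
  also have "\<dots> = K / 6 * ((a + b) * \<tau>^3 + b * (\<tau> + \<tau>')^3)" by (simp add: algebra_simps)
  also have "\<dots> = K / 6 * ((1 + r) * \<tau>^2 + \<tau> * \<tau>' * (1 + r)^2)" using co by simp
  also have "\<dots> \<le> K / 6 * (4 * m^2 + m * m * 4^2)"
  proof -
    have r4: "1 + r \<le> 4" "0 \<le> 1 + r" using r3 r0 by (auto simp: r_def)
    have "\<tau>^2 \<le> m^2" using tau by (simp add: power_mono)
    then have "(1 + r) * \<tau>^2 \<le> 4 * m^2" using r4 by (intro mult_mono) auto
    moreover have "\<tau> * \<tau>' * (1 + r)^2 \<le> m * m * 4^2"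
      using tau r4 by (intro mult_mono power_mono) auto
    ultimately show ?thesis using K0 by (intro mult_left_mono) auto
  qed
  also have "\<dots> \<le> 4 * K * m^2" using K0 by (simp add: power2_eq_square field_simps)
  finally show ?thesis using e unfolding a_def b_def r_def by simp
qed

lemma cont_bnd:
  fixes g :: "'a::topological_space \<Rightarrow> real"
  assumes "continuous_on UNIV g" "compact S"
  shows "\<exists>B>0. \<forall>p\<in>S. \<bar>g p\<bar> \<le> B"
proof -
  have "compact (g ` S)" using assms by (intro compact_continuous_image continuous_on_subset[OF assms(1)]) auto
  then have "bounded (g ` S)" by (rule compact_imp_bounded)
  then obtain B where "B > 0" "\<forall>y\<in>g ` S. norm y \<le> B" using bounded_pos by blast
  then show ?thesis by auto
qed

lemma t_mono:
  fixes t :: "nat \<Rightarrow> real"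
  assumes inc: "\<forall>k\<in>{1..N}. t (k - 1) < t k" and ij: "i \<le> j" "j \<le> N"
  shows "t i \<le> t j"
  using ij
proof (induction j)
  case 0 then show ?case by simp
next
  case (Suc j)
  show ?case
  proof (cases "i = Suc j")
    case True then show ?thesis by simp
  next
    case False
    then have "i \<le> j" "j \<le> N" using Suc.prems by auto
    then have "t i \<le> t j" using Suc.IH by simp
    moreover have "t j < t (Suc j)" using inc Suc.prems(2) by force
    ultimately show ?thesis by simp
  qed
qed

lemma tau_pos:
  assumes inc: "\<forall>k\<in>{1..N}. t (k - 1) < t k" and n: "n \<in> {1..N}"
  shows "tau t n > 0"
  using inc n by (auto simp: tau_def)

lemma tau_le_max:
  assumes n: "n \<in> {1..N}"
  shows "tau t n \<le> tau_max t N"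
  unfolding tau_max_def using n by (intro Max_ge) auto

lemma D2_ab:
  assumes "n \<ge> 1"
  shows "D2 t U n i j = (1 + 2 * ratio t n) / (tau t n * (1 + ratio t n)) * (U n i j - U (n - 1) i j)
      - (ratio t n)^2 / (tau t n * (1 + ratio t n)) * (U (n - 1) i j - U (n - 2) i j)"
  using assms by (cases "n = 1") (auto simp: D2_def ratio_def)

lemma step_cond:
  fixes \<tau> r \<eta> \<kappa> :: real
  assumes tau: "\<tau> > 0" and r: "r \<ge> 0" and eta: "1/2 \<le> \<eta>" "\<eta> < 1" and kap: "\<kappa> \<ge> 2"
    and hyp: "\<tau> \<le> ((1 + 2 * r) * \<eta> - r^2) / (\<eta>^2 * (1 + r)) * ((1 - \<eta>) / \<kappa>)"
  defines "a \<equiv> (1 + 2 * r) / (\<tau> * (1 + r))" and "b \<equiv> r^2 / (\<tau> * (1 + r))"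
  shows "(1 - \<eta>) * (a - b / \<eta>) \<ge> \<eta> * \<kappa>" "a \<ge> \<kappa>" "a > 1" "a - 1 \<ge> 1 / (2 * \<tau>)" "b \<ge> 0"
proof -
  define X where "X = (1 + 2 * r) * \<eta> - r^2"
  have e0: "\<eta> > 0" using eta by simp
  have r1: "1 + r > 0" using r by simp
  have k0: "\<kappa> > 0" using kap by simp
  define D where "D = \<tau> * (1 + r)"
  have D: "D > 0" using tau r1 by (simp add: D_def)
  have aa: "a = ((1 + 2 * r) * \<eta>) / (\<eta> * D)" unfolding a_def D_def using e0 by simp
  have bb: "b / \<eta> = r^2 / (\<eta> * D)" unfolding b_def D_def by (simp add: divide_divide_eq_left mult.commute)
  have "a - b / \<eta> = X / (\<eta> * D)" unfolding aa bb X_def by (simp add: diff_divide_distrib)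
  then have cX: "(1 - \<eta>) * (a - b / \<eta>) = (1 - \<eta>) * X / (\<eta> * \<tau> * (1 + r))"
    by (simp add: D_def mult.assoc)
  have "\<tau> * (\<eta>^2 * (1 + r) * \<kappa>) \<le> X * (1 - \<eta>)"
  proof -
    have pos: "\<eta>^2 * (1 + r) * \<kappa> > 0" using e0 r1 k0 by simp
    have "\<tau> \<le> X * (1 - \<eta>) / (\<eta>^2 * (1 + r) * \<kappa>)" using hyp unfolding X_def by (simp add: field_simps)
    then show ?thesis using pos by (simp add: pos_le_divide_eq)
  qed
  then have "\<eta> * \<kappa> * (\<eta> * \<tau> * (1 + r)) \<le> (1 - \<eta>) * X" by (simp add: power2_eq_square algebra_simps)
  moreover have "\<eta> * \<tau> * (1 + r) > 0" using e0 tau r1 by simp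
  ultimately have c: "(1 - \<eta>) * (a - b / \<eta>) \<ge> \<eta> * \<kappa>" unfolding cX by (simp add: pos_le_divide_eq)
  then show "(1 - \<eta>) * (a - b / \<eta>) \<ge> \<eta> * \<kappa>" .
  show b0: "b \<ge> 0" unfolding b_def using tau r1 by simp
  have "b / \<eta> \<ge> 0" using b0 e0 by simp
  then have "(1 - \<eta>) * (a - b / \<eta>) \<le> (1 - \<eta>) * a" using eta by (simp add: mult_left_mono)
  with c have "\<eta> * \<kappa> \<le> (1 - \<eta>) * a" by linarith
  moreover have "(1 - \<eta>) * \<kappa> \<le> \<eta> * \<kappa>" using eta k0 by (simp add: mult_right_mono)
  ultimately have "(1 - \<eta>) * \<kappa> \<le> (1 - \<eta>) * a" by linarith
  then show ak: "a \<ge> \<kappa>" using eta by simp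
  then show "a > 1" using kap by linarith
  have a1: "a \<ge> 1 / \<tau>"
  proof -
    have g1: "(1 + 2 * r) / (1 + r) \<ge> 1" using r1 r by simp
    have "(1 + 2 * r) / (1 + r) / \<tau> \<ge> 1 / \<tau>" using divide_right_mono[OF g1 less_imp_le[OF tau]] .
    moreover have "(1 + 2 * r) / (\<tau> * (1 + r)) = (1 + 2 * r) / (1 + r) / \<tau>"
      by (simp add: divide_divide_eq_left mult.commute)
    ultimately show ?thesis unfolding a_def by (simp add: mult.commute)
  qed
  have "a - 1 \<ge> a / 2" using ak kap by linarith
  moreover have "a / 2 \<ge> 1 / (2 * \<tau>)" using a1 by simp
  ultimately show "a - 1 \<ge> 1 / (2 * \<tau>)" by linarith
qed

lemma eta_bounds:
  fixes rs :: real
  assumes "1 \<le> rs" "rs < 1 + sqrt 2"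
  shows "1/2 \<le> 2 * rs^2 / (1 + rs)^2" "2 * rs^2 / (1 + rs)^2 < 1"
proof -
  have p: "(1 + rs)^2 > 0" using assms by simp
  have "(1 + rs)^2 \<le> 4 * rs^2"
  proof -
    have "1 + rs \<le> 2 * rs" using assms by simp
    then have "(1 + rs)^2 \<le> (2 * rs)^2" using assms by (intro power_mono) auto
    then show ?thesis by (simp add: power_mult_distrib)
  qed
  then show "1/2 \<le> 2 * rs^2 / (1 + rs)^2" using p by (simp add: le_divide_eq)
  have "(rs - 1)^2 < (sqrt 2)^2" using assms by (intro power_strict_mono) auto
  then have "(rs - 1)^2 < 2" by simp
  then have "2 * rs^2 < (1 + rs)^2" by (simp add: power2_eq_square algebra_simps)
  then show "2 * rs^2 / (1 + rs)^2 < 1" using p by (simp add: divide_less_eq)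
qed

lemma sqrt2_lt2: "1 + sqrt 2 < 3"
proof -
  have "sqrt 2 < 2"
  proof (rule ccontr)
    assume "\<not> sqrt 2 < 2"
    then have "2 * 2 \<le> sqrt 2 * sqrt 2" by (intro mult_mono) auto
    then show False by simp
  qed
  then show ?thesis by simp
qed

lemma nb_x:
  fixes u :: "real \<times> real \<times> real \<Rightarrow> real"
  assumes per_x: "\<And>x y s. u (x + L, y, s) = u (x, y, s)" and M: "M \<ge> 1" and i: "i \<in> {1..M}"
  shows "u (real (ip M i) * (L / real M), y, s) = u (real i * (L / real M) + L / real M, y, s)"
    "u (real (im M i) * (L / real M), y, s) = u (real i * (L / real M) - L / real M, y, s)"
proof -
  have hML: "real M * (L / real M) = L" using M by simp
  show "u (real (ip M i) * (L / real M), y, s) = u (real i * (L / real M) + L / real M, y, s)"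
  proof (cases "i = M")
    case True
    have "u (real i * (L / real M) + L / real M, y, s) = u (L / real M + L, y, s)" using True hML by (simp add: add.commute)
    also have "\<dots> = u (L / real M, y, s)" by (rule per_x)
    finally show ?thesis using True by (simp add: ip_def)
  next
    case False
    then show ?thesis using M by (simp add: ip_def field_simps)
  qed
  show "u (real (im M i) * (L / real M), y, s) = u (real i * (L / real M) - L / real M, y, s)"
  proof (cases "i = 1")
    case True
    have "u (real (im M i) * (L / real M), y, s) = u (0 + L, y, s)" using True hML by (simp add: im_def)
    also have "\<dots> = u (0, y, s)" by (rule per_x)
    finally show ?thesis using True by simp
  next
    case False
    then have "i \<ge> 2" using i by auto
    then have "real (i - 1) = real i - 1" by simp
    then show ?thesis using False by (simp add: im_def left_diff_distrib diff_divide_distrib)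
  qed
qed

lemma nb_y:
  fixes u :: "real \<times> real \<times> real \<Rightarrow> real"
  assumes per_y: "\<And>x y s. u (x, y + L, s) = u (x, y, s)" and M: "M \<ge> 1" and i: "i \<in> {1..M}"
  shows "u (x, real (ip M i) * (L / real M), s) = u (x, real i * (L / real M) + L / real M, s)"
    "u (x, real (im M i) * (L / real M), s) = u (x, real i * (L / real M) - L / real M, s)"
proof -
  have hML: "real M * (L / real M) = L" using M by simp
  show "u (x, real (ip M i) * (L / real M), s) = u (x, real i * (L / real M) + L / real M, s)"
  proof (cases "i = M")
    case True
    have "u (x, real i * (L / real M) + L / real M, s) = u (x, L / real M + L, s)" using True hML by (simp add: add.commute)
    also have "\<dots> = u (x, L / real M, s)" by (rule per_y)
    finally show ?thesis using True by (simp add: ip_def)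
  next
    case False
    then show ?thesis using M by (simp add: ip_def field_simps)
  qed
  show "u (x, real (im M i) * (L / real M), s) = u (x, real i * (L / real M) - L / real M, s)"
  proof (cases "i = 1")
    case True
    have "u (x, real (im M i) * (L / real M), s) = u (x, 0 + L, s)" using True hML by (simp add: im_def)
    also have "\<dots> = u (x, 0, s)" by (rule per_y)
    finally show ?thesis using True by simp
  next
    case False
    then have "i \<ge> 2" using i by auto
    then have "real (i - 1) = real i - 1" by simp
    then show ?thesis using False by (simp add: im_def left_diff_distrib diff_divide_distrib)
  qed
qed

lemma lap_diff: "lap_h h M (\<lambda>i j. A i j - B i j) i j = lap_h h M A i j - lap_h h M B i j"
  unfolding lap_h_def by (simp add: diff_divide_distrib[symmetric] algebra_simps)

lemma fAC_diff: "fAC x - fAC y = (x^2 + x * y + y^2 - 1) * (x - y)"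
  by (simp add: fAC_def power2_eq_square power3_eq_cube algebra_simps)

lemma q_bounds:
  fixes x y :: real
  assumes "\<bar>x\<bar> \<le> 1" "\<bar>y\<bar> \<le> 1"
  shows "0 \<le> x^2 + x * y + y^2" "x^2 + x * y + y^2 \<le> 3"
proof -
  have "x^2 + x * y + y^2 = (x + y/2)^2 + 3/4 * y^2" by (simp add: power2_eq_square field_simps)
  then show "0 \<le> x^2 + x * y + y^2" by simp
  have "x^2 \<le> 1" "y^2 \<le> 1" using assms by (simp_all add: abs_square_le_1)
  moreover have "x * y \<le> 1" using assms by (smt (verit) abs_mult abs_le_iff mult_le_one abs_ge_zero)
  ultimately show "x^2 + x * y + y^2 \<le> 3" by linarith
qed

lemma grid_norm_neg: "grid_maxnorm M (\<lambda>i j. - V i j) = grid_maxnorm M V"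
  unfolding grid_maxnorm_def by simp

lemma err_grid:
  fixes Ea Eb Ec qg Rg :: "nat \<Rightarrow> nat \<Rightarrow> real" and M :: nat
  assumes M: "M \<ge> 1" and h: "h > 0" and eta: "0 < \<eta>" "\<eta> < 1" and a: "a > 1" and b: "b \<ge> 0"
    and c: "c = (1 - \<eta>) * (a - b / \<eta>)" "c \<ge> \<eta> * (2 + 4 * (\<epsilon>\<^sup>2 / h\<^sup>2))"
    and q: "\<And>i j. i \<in> {1..M} \<Longrightarrow> j \<in> {1..M} \<Longrightarrow> 0 \<le> qg i j \<and> qg i j \<le> 3"
    and eq: "\<And>i j. i \<in> {1..M} \<Longrightarrow> j \<in> {1..M} \<Longrightarrow>
       a * (Ec i j - Eb i j) - b * (Eb i j - Ea i j) = \<epsilon>\<^sup>2 * lap_h h M Ec i j - (qg i j - 1) * Ec i j + Rg i j"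
  shows "(a - 1) * grid_maxnorm M (\<lambda>i j. Ec i j - \<eta> * Eb i j) \<le> (c + \<eta>) * grid_maxnorm M Eb
           + (b / \<eta>) * grid_maxnorm M (\<lambda>i j. Eb i j - \<eta> * Ea i j) + grid_maxnorm M Rg"
proof -
  define RHS where "RHS = (c + \<eta>) * grid_maxnorm M Eb
           + (b / \<eta>) * grid_maxnorm M (\<lambda>i j. Eb i j - \<eta> * Ea i j) + grid_maxnorm M Rg"
  have up: "(a - 1) * (Ec i j - \<eta> * Eb i j) \<le> RHS" if "i \<in> {1..M}" "j \<in> {1..M}" for i j
    unfolding RHS_def by (rule err_grid_upper[OF M h eta a b c q eq that])
  have lo: "(a - 1) * ((- Ec i j) - \<eta> * (- Eb i j)) \<le> RHS" if ij: "i \<in> {1..M}" "j \<in> {1..M}" for i j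
  proof -
    have X: "(a - 1) * ((- Ec i j) - \<eta> * (- Eb i j)) \<le> (c + \<eta>) * grid_maxnorm M (\<lambda>i j. - Eb i j)
           + (b / \<eta>) * grid_maxnorm M (\<lambda>i j. (- Eb i j) - \<eta> * (- Ea i j)) + grid_maxnorm M (\<lambda>i j. - Rg i j)"
    proof (rule err_grid_upper[where Ea="\<lambda>i j. - Ea i j" and Eb="\<lambda>i j. - Eb i j" and Ec="\<lambda>i j. - Ec i j"
          and Rg="\<lambda>i j. - Rg i j", OF M h eta a b c q _ ij])
      fix i j assume "i \<in> {1..M}" "j \<in> {1..M}"
      from eq[OF this] show "a * (- Ec i j - - Eb i j) - b * (- Eb i j - - Ea i j) =
         \<epsilon>\<^sup>2 * lap_h h M (\<lambda>i j. - Ec i j) i j - (qg i j - 1) * - Ec i j + - Rg i j"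
        by (simp add: lap_neg algebra_simps)
    qed
    have nn: "grid_maxnorm M (\<lambda>i j. (- Eb i j) - \<eta> * (- Ea i j)) = grid_maxnorm M (\<lambda>i j. Eb i j - \<eta> * Ea i j)"
      unfolding grid_maxnorm_def by (simp add: abs_minus_commute)
    show ?thesis using X unfolding RHS_def grid_norm_neg nn .
  qed
  have a1: "a - 1 > 0" using a by simp
  have "\<bar>Ec i j - \<eta> * Eb i j\<bar> \<le> RHS / (a - 1)" if "i \<in> {1..M}" "j \<in> {1..M}" for i j
  proof -
    define v where "v = Ec i j - \<eta> * Eb i j"
    have u1: "(a - 1) * v \<le> RHS" using up[OF that] unfolding v_def .
    have "(- Ec i j) - \<eta> * (- Eb i j) = - v" unfolding v_def by simp
    then have u2: "(a - 1) * (- v) \<le> RHS" using lo[OF that] by simp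
    have "(a - 1) * \<bar>v\<bar> \<le> RHS" using u1 u2 by (cases "v \<ge> 0") auto
    then show ?thesis unfolding v_def[symmetric] using a1 by (simp add: pos_le_divide_eq mult.commute)
  qed
  then have "grid_maxnorm M (\<lambda>i j. Ec i j - \<eta> * Eb i j) \<le> RHS / (a - 1)"
    by (intro grid_norm_le[OF M]) auto
  then show ?thesis using a1 unfolding RHS_def[symmetric] by (simp add: pos_le_divide_eq mult.commute)
qed

lemma grid_norm_comb:
  fixes V E :: "nat \<Rightarrow> nat \<Rightarrow> real"
  assumes M: "M \<ge> 1" and eta: "\<eta> \<ge> 0"
  shows "grid_maxnorm M (\<lambda>i j. V i j + \<eta> * E i j) \<le> grid_maxnorm M V + \<eta> * grid_maxnorm M E"
proof (rule grid_norm_le[OF M])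
  fix i j assume ij: "i \<in> {1..M}" "j \<in> {1..M}"
  have "\<bar>V i j + \<eta> * E i j\<bar> \<le> \<bar>V i j\<bar> + \<eta> * \<bar>E i j\<bar>" using eta by (simp add: abs_mult abs_triangle_ineq order_trans[OF abs_triangle_ineq])
  also have "\<dots> \<le> grid_maxnorm M V + \<eta> * grid_maxnorm M E"
    using grid_le_norm[OF ij, of V] grid_le_norm[OF ij, of E] eta by (intro add_mono mult_left_mono) auto
  finally show "\<bar>V i j + \<eta> * E i j\<bar> \<le> grid_maxnorm M V + \<eta> * grid_maxnorm M E" .
qed

lemma rec_step:
  fixes a \<tau> \<eta> Rm tn X Bn :: real
  assumes a: "a - 1 \<ge> 1 / (2 * \<tau>)" "a > 1" and tau: "\<tau> > 0" and eta: "0 < \<eta>" "\<eta> < 1"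
    and Rm: "Rm \<ge> 0" and tn: "tn \<ge> 0"
    and Bn: "Bn = 2 * Rm * tn * exp (2 * tn / (1 - \<eta>))"
    and ineq: "(a - 1) * X \<le> (a + \<eta> / (1 - \<eta>)) * Bn + Rm"
  shows "X \<le> 2 * Rm * (tn + \<tau>) * exp (2 * (tn + \<tau>) / (1 - \<eta>))"
proof -
  define E where "E = exp (2 * tn / (1 - \<eta>))"
  define P where "P = Bn / (1 - \<eta>) + Rm"
  have Bn0: "Bn \<ge> 0" using Bn Rm tn by simp
  have P0: "P \<ge> 0" using Bn0 Rm eta by (simp add: P_def)
  have id: "a + \<eta> / (1 - \<eta>) = (a - 1) + 1 / (1 - \<eta>)" using eta by (simp add: field_simps)
  have "(a - 1) * X \<le> (a - 1) * Bn + P" using ineq unfolding id P_def by (simp add: algebra_simps)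
  then have "(a - 1) * (X - Bn) \<le> P" by (simp add: algebra_simps)
  then have "X - Bn \<le> P / (a - 1)" using a by (simp add: pos_le_divide_eq mult.commute)
  also have "P / (a - 1) \<le> P * (2 * \<tau>)"
  proof -
    have pos: "0 < 1 / (2 * \<tau>)" using tau by simp
    have "1 / (a - 1) \<le> 1 / (1 / (2 * \<tau>))"
      by (rule divide_left_mono[OF a(1)]) (use pos a in auto)
    then have i1: "1 / (a - 1) \<le> 2 * \<tau>" by simp
    have "P * (1 / (a - 1)) \<le> P * (2 * \<tau>)" using mult_left_mono[OF i1 P0] .
    then show ?thesis by simp
  qed
  finally have X: "X \<le> Bn + 2 * \<tau> * P" by (simp add: algebra_simps)
  have Ea: "E > 0" unfolding E_def by simp
  have eE: "exp (2 * (tn + \<tau>) / (1 - \<eta>)) = E * exp (2 * \<tau> / (1 - \<eta>))"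
    unfolding E_def by (simp add: exp_add[symmetric] add_divide_distrib distrib_left)
  have ge1: "exp (2 * \<tau> / (1 - \<eta>)) \<ge> 1 + 2 * \<tau> / (1 - \<eta>)" by (rule exp_ge_add_one_self)
  have ge1': "exp (2 * (tn + \<tau>) / (1 - \<eta>)) \<ge> 1" using tn tau eta by simp
  have "2 * Rm * (tn + \<tau>) * exp (2 * (tn + \<tau>) / (1 - \<eta>))
      = 2 * Rm * tn * E * exp (2 * \<tau> / (1 - \<eta>)) + 2 * Rm * \<tau> * exp (2 * (tn + \<tau>) / (1 - \<eta>))"
    unfolding eE by (simp add: algebra_simps)
  also have "\<dots> \<ge> 2 * Rm * tn * E * (1 + 2 * \<tau> / (1 - \<eta>)) + 2 * Rm * \<tau> * 1"
    using ge1 ge1' Rm tn tau Ea by (intro add_mono mult_left_mono) auto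
  finally have "2 * Rm * (tn + \<tau>) * exp (2 * (tn + \<tau>) / (1 - \<eta>)) \<ge> Bn + 2 * \<tau> * P"
    unfolding P_def Bn E_def[symmetric] using eta by (simp add: field_simps)
  then show ?thesis using X by linarith
qed

lemma consistency:
  fixes u ut utt uttt ux uxx uxxx uxxxx uy uyy uyyy uyyyy :: "real \<times> real \<times> real \<Rightarrow> real"
    and t :: "nat \<Rightarrow> real" and L \<epsilon> T K2 K3 K4x K4y h :: real and M N n i j :: nat
  assumes L: "L > 0" and eps: "\<epsilon> > 0" and M: "M \<ge> 1" and h: "h = L / real M"
    and per_x: "\<And>x y s. u (x + L, y, s) = u (x, y, s)"
    and per_y: "\<And>x y s. u (x, y + L, s) = u (x, y, s)"
    and dt1: "\<And>x y s. ((\<lambda>r. u (x, y, r)) has_real_derivative ut (x, y, s)) (at s)"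
    and dt2: "\<And>x y s. ((\<lambda>r. ut (x, y, r)) has_real_derivative utt (x, y, s)) (at s)"
    and dt3: "\<And>x y s. ((\<lambda>r. utt (x, y, r)) has_real_derivative uttt (x, y, s)) (at s)"
    and dx1: "\<And>x y s. ((\<lambda>r. u (r, y, s)) has_real_derivative ux (x, y, s)) (at x)"
    and dx2: "\<And>x y s. ((\<lambda>r. ux (r, y, s)) has_real_derivative uxx (x, y, s)) (at x)"
    and dx3: "\<And>x y s. ((\<lambda>r. uxx (r, y, s)) has_real_derivative uxxx (x, y, s)) (at x)"
    and dx4: "\<And>x y s. ((\<lambda>r. uxxx (r, y, s)) has_real_derivative uxxxx (x, y, s)) (at x)"
    and dy1: "\<And>x y s. ((\<lambda>r. u (x, r, s)) has_real_derivative uy (x, y, s)) (at y)"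
    and dy2: "\<And>x y s. ((\<lambda>r. uy (x, r, s)) has_real_derivative uyy (x, y, s)) (at y)"
    and dy3: "\<And>x y s. ((\<lambda>r. uyy (x, r, s)) has_real_derivative uyyy (x, y, s)) (at y)"
    and dy4: "\<And>x y s. ((\<lambda>r. uyyy (x, r, s)) has_real_derivative uyyyy (x, y, s)) (at y)"
    and bK2: "\<And>p. p \<in> {0..2*L} \<times> {0..2*L} \<times> {0..T} \<Longrightarrow> \<bar>utt p\<bar> \<le> K2"
    and bK3: "\<And>p. p \<in> {0..2*L} \<times> {0..2*L} \<times> {0..T} \<Longrightarrow> \<bar>uttt p\<bar> \<le> K3"
    and bK4x: "\<And>p. p \<in> {0..2*L} \<times> {0..2*L} \<times> {0..T} \<Longrightarrow> \<bar>uxxxx p\<bar> \<le> K4x"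
    and bK4y: "\<And>p. p \<in> {0..2*L} \<times> {0..2*L} \<times> {0..T} \<Longrightarrow> \<bar>uyyyy p\<bar> \<le> K4y"
    and pde: "\<And>x y s. 0 < s \<Longrightarrow> s \<le> T \<Longrightarrow>
               ut (x, y, s) = \<epsilon>\<^sup>2 * (uxx (x, y, s) + uyy (x, y, s)) - fAC (u (x, y, s))"
    and t0: "t 0 = 0" and tN: "t N = T" and inc: "\<forall>k\<in>{1..N}. t (k - 1) < t k"
    and rat: "\<And>k. k \<in> {2..N} \<Longrightarrow> ratio t k \<le> 3"
    and tau1: "tau t 1 \<le> h\<^sup>2 / (4 * \<epsilon>\<^sup>2)"
    and n: "n \<in> {1..N}" and ij: "i \<in> {1..M}" "j \<in> {1..M}"
  shows "\<bar>D2 t (\<lambda>n i j. u (real i * h, real j * h, t n)) n i j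
          - \<epsilon>\<^sup>2 * lap_h h M (\<lambda>i j. u (real i * h, real j * h, t n)) i j + fAC (u (real i * h, real j * h, t n))\<bar>
         \<le> (4 * K3 + K2 / (8 * \<epsilon>\<^sup>2) + \<epsilon>\<^sup>2 * (K4x + K4y) / 12) * ((tau_max t N)\<^sup>2 + h\<^sup>2)"
proof -
  define Bx where "Bx = {0..2*L} \<times> {0..2*L} \<times> {0..T}"
  have T0: "0 \<le> T" using t_mono[OF inc, of 0 N] t0 tN by simp
  have z: "(0, 0, 0) \<in> Bx" using L T0 by (simp add: Bx_def)
  have K0: "K2 \<ge> 0" "K3 \<ge> 0" "K4x \<ge> 0" "K4y \<ge> 0"
    using bK2[OF z[unfolded Bx_def]] bK3[OF z[unfolded Bx_def]] bK4x[OF z[unfolded Bx_def]] bK4y[OF z[unfolded Bx_def]] by auto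
  have hpos: "h > 0" using L M h by simp
  have hL: "h \<le> L" using L M h by (simp add: divide_le_eq)
  define tn where "tn = t n"
  have tn: "0 < tn" "tn \<le> T"
  proof -
    have "t 0 < t 1" using inc n by force
    moreover have "t 1 \<le> t n" using t_mono[OF inc, of 1 n] n by auto
    ultimately show "0 < tn" using t0 by (simp add: tn_def)
    show "tn \<le> T" using t_mono[OF inc, of n N] n tN by (simp add: tn_def)
  qed
  define x where "x = real i * h"
  define y where "y = real j * h"
  have xr: "h \<le> x" "x \<le> L"
  proof -
    show "h \<le> x" using ij hpos by (simp add: x_def)
    have "real i * h \<le> real M * h" using ij hpos by (intro mult_right_mono) auto
    then show "x \<le> L" using M h by (simp add: x_def)
  qed
  have yr: "h \<le> y" "y \<le> L"
  proof -
    show "h \<le> y" using ij hpos by (simp add: y_def)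
    have "real j * h \<le> real M * h" using ij hpos by (intro mult_right_mono) auto
    then show "y \<le> L" using M h by (simp add: y_def)
  qed
  define Sx where "Sx = u (x + h, y, tn) + u (x - h, y, tn) - 2 * u (x, y, tn)"
  define Sy where "Sy = u (x, y + h, tn) + u (x, y - h, tn) - 2 * u (x, y, tn)"
  have lapU: "lap_h h M (\<lambda>i j. u (real i * h, real j * h, t n)) i j = (Sx + Sy) / h\<^sup>2"
    unfolding lap_h_def Sx_def Sy_def x_def y_def tn_def h
    using nb_x[OF per_x M ij(1)] nb_y[OF per_y M ij(2)] by (simp add: algebra_simps)
  have bSx: "\<bar>Sx - h\<^sup>2 * uxx (x, y, tn)\<bar> \<le> K4x * h ^ 4 / 12"
    unfolding Sx_def
    by (rule taylor4_sym[of "\<lambda>r. u (r, y, tn)" "\<lambda>r. ux (r, y, tn)" "\<lambda>r. uxx (r, y, tn)" "\<lambda>r. uxxx (r, y, tn)" "\<lambda>r. uxxxx (r, y, tn)"])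
       (use dx1 dx2 dx3 dx4 hpos xr yr tn L in \<open>auto intro!: bK4x simp: mem_Times_iff\<close>)
  have bSy: "\<bar>Sy - h\<^sup>2 * uyy (x, y, tn)\<bar> \<le> K4y * h ^ 4 / 12"
    unfolding Sy_def
    by (rule taylor4_sym[of "\<lambda>r. u (x, r, tn)" "\<lambda>r. uy (x, r, tn)" "\<lambda>r. uyy (x, r, tn)" "\<lambda>r. uyyy (x, r, tn)" "\<lambda>r. uyyyy (x, r, tn)"])
       (use dy1 dy2 dy3 dy4 hpos xr yr tn L in \<open>auto intro!: bK4y simp: mem_Times_iff\<close>)
  have space: "\<bar>(Sx + Sy) / h\<^sup>2 - (uxx (x, y, tn) + uyy (x, y, tn))\<bar> \<le> (K4x + K4y) * h\<^sup>2 / 12"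
  proof -
    have "(Sx + Sy) / h\<^sup>2 - (uxx (x, y, tn) + uyy (x, y, tn))
        = ((Sx - h\<^sup>2 * uxx (x, y, tn)) + (Sy - h\<^sup>2 * uyy (x, y, tn))) / h\<^sup>2"
      using hpos by (simp add: field_simps)
    also have "\<bar>\<dots>\<bar> \<le> (K4x * h ^ 4 / 12 + K4y * h ^ 4 / 12) / h\<^sup>2"
      using bSx bSy hpos by (simp add: divide_right_mono order_trans[OF abs_triangle_ineq add_mono])
    also have "\<dots> = (K4x + K4y) * h\<^sup>2 / 12" using hpos by (simp add: field_simps power2_eq_square power4_eq_xxxx)
    finally show ?thesis .
  qed
  define \<phi> where "\<phi> = (\<lambda>r. u (x, y, r))"
  have uhat: "(\<lambda>n i j. u (real i * h, real j * h, t n)) m i j = \<phi> (t m)" for m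
    by (simp add: \<phi>_def x_def y_def)
  have tmono: "t a \<le> t b" if "a \<le> b" "b \<le> N" for a b using t_mono[OF inc that] .
  have tnn: "0 \<le> t a" if "a \<le> N" for a using tmono[of 0 a] that t0 by simp
  have time: "\<bar>D2 t (\<lambda>n i j. u (real i * h, real j * h, t n)) n i j - ut (x, y, tn)\<bar>
      \<le> 4 * K3 * (tau_max t N)\<^sup>2 + K2 * h\<^sup>2 / (8 * \<epsilon>\<^sup>2)"
  proof (cases "n = 1")
    case True
    define \<tau> where "\<tau> = tau t 1"
    have tp: "\<tau> > 0" using tau_pos[OF inc, of 1] n by (auto simp: \<tau>_def)
    have e0: "t 0 = t 1 - \<tau>" by (simp add: \<tau>_def tau_def)
    have tt: "t 1 - \<tau> = 0" "t 1 \<le> T" using e0 t0 tmono[of 1 N] n tN by auto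
    have D: "D2 t (\<lambda>n i j. u (real i * h, real j * h, t n)) n i j = (\<phi> (t 1) - \<phi> (t 1 - \<tau>)) / \<tau>"
      using True by (simp add: D2_def uhat \<tau>_def tau_def)
    have "\<bar>(\<phi> (t 1) - \<phi> (t 1 - \<tau>)) / \<tau> - ut (x, y, t 1)\<bar> \<le> K2 * \<tau> / 2"
      unfolding \<phi>_def
      by (rule taylor2_back[of "\<lambda>r. u (x, y, r)" "\<lambda>r. ut (x, y, r)" "\<lambda>r. utt (x, y, r)"])
         (use dt1 dt2 tp xr yr hpos L tt in \<open>auto intro!: bK2 simp: mem_Times_iff\<close>)
    also have "\<dots> \<le> K2 * (h\<^sup>2 / (4 * \<epsilon>\<^sup>2)) / 2"
      using tau1 K0 unfolding \<tau>_def by (intro divide_right_mono mult_left_mono) auto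
    also have "\<dots> = K2 * h\<^sup>2 / (8 * \<epsilon>\<^sup>2)" by simp
    finally have "\<bar>D2 t (\<lambda>n i j. u (real i * h, real j * h, t n)) n i j - ut (x, y, tn)\<bar> \<le> K2 * h\<^sup>2 / (8 * \<epsilon>\<^sup>2)"
      using D True by (simp add: tn_def)
    moreover have "0 \<le> 4 * K3 * (tau_max t N)\<^sup>2" using K0 by simp
    ultimately show ?thesis by linarith
  next
    case False
    then have n2: "n \<ge> 2" "n - 1 \<in> {1..N}" using n by auto
    define \<tau> where "\<tau> = tau t n"
    define \<tau>' where "\<tau>' = tau t (n - 1)"
    have tp: "\<tau> > 0" "\<tau>' > 0" using tau_pos[OF inc n] tau_pos[OF inc n2(2)] by (auto simp: \<tau>_def \<tau>'_def)
    have e1: "t (n - 1) = tn - \<tau>" by (simp add: \<tau>_def tau_def tn_def)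
    have e2: "t (n - 2) = tn - (\<tau> + \<tau>')"
    proof -
      have "n - 1 - 1 = n - 2" by simp
      then show ?thesis using e1 by (simp add: \<tau>'_def tau_def)
    qed
    have r: "ratio t n = \<tau> / \<tau>'" using n2 by (simp add: ratio_def \<tau>_def \<tau>'_def)
    have D: "D2 t (\<lambda>n i j. u (real i * h, real j * h, t n)) n i j =
        (1 + 2 * (\<tau> / \<tau>')) / (\<tau> * (1 + \<tau> / \<tau>')) * (\<phi> tn - \<phi> (tn - \<tau>))
          - (\<tau> / \<tau>')^2 / (\<tau> * (1 + \<tau> / \<tau>')) * (\<phi> (tn - \<tau>) - \<phi> (tn - (\<tau> + \<tau>')))"
    proof -
      have uh: "u (real i * h, real j * h, s) = \<phi> s" for s by (simp add: \<phi>_def x_def y_def)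
      have "n \<ge> 1" using n2 by simp
      note D0 = D2_ab[OF this, of t "\<lambda>n i j. u (real i * h, real j * h, t n)" i j]
      show ?thesis using D0 unfolding uh r e1 e2 tn_def[symmetric] \<tau>_def[symmetric] .
    qed
    have rb: "\<tau> / \<tau>' \<le> 3" using rat[of n] n2 n r by auto
    have lo: "0 \<le> tn - (\<tau> + \<tau>')" using e2 tnn[of "n - 2"] n by auto
    have "\<bar>D2 t (\<lambda>n i j. u (real i * h, real j * h, t n)) n i j - ut (x, y, tn)\<bar> \<le> 4 * K3 * (tau_max t N)\<^sup>2"
      unfolding D \<phi>_def
      by (rule bdf2_consist[of "\<lambda>r. u (x, y, r)" "\<lambda>r. ut (x, y, r)" "\<lambda>r. utt (x, y, r)" "\<lambda>r. uttt (x, y, r)"])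
         (use dt1 dt2 dt3 tp xr yr hpos L n n2 tn lo rb tau_le_max[OF n, of t] tau_le_max[OF n2(2), of t]
           in \<open>auto intro!: bK3 simp: mem_Times_iff \<tau>_def \<tau>'_def\<close>)
    moreover have "0 \<le> K2 * h\<^sup>2 / (8 * \<epsilon>\<^sup>2)" using K0 by simp
    ultimately show ?thesis by linarith
  qed
  have fu: "fAC (u (x, y, tn)) = \<epsilon>\<^sup>2 * (uxx (x, y, tn) + uyy (x, y, tn)) - ut (x, y, tn)"
    using pde[OF tn] by simp
  have "D2 t (\<lambda>n i j. u (real i * h, real j * h, t n)) n i j
          - \<epsilon>\<^sup>2 * lap_h h M (\<lambda>i j. u (real i * h, real j * h, t n)) i j + fAC (u (real i * h, real j * h, t n))
      = (D2 t (\<lambda>n i j. u (real i * h, real j * h, t n)) n i j - ut (x, y, tn))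
        - \<epsilon>\<^sup>2 * ((Sx + Sy) / h\<^sup>2 - (uxx (x, y, tn) + uyy (x, y, tn)))"
    unfolding lapU using fu by (simp add: x_def y_def tn_def algebra_simps)
  also have "\<bar>\<dots>\<bar> \<le> (4 * K3 * (tau_max t N)\<^sup>2 + K2 * h\<^sup>2 / (8 * \<epsilon>\<^sup>2)) + \<epsilon>\<^sup>2 * ((K4x + K4y) * h\<^sup>2 / 12)"
  proof -
    have "\<bar>\<epsilon>\<^sup>2 * ((Sx + Sy) / h\<^sup>2 - (uxx (x, y, tn) + uyy (x, y, tn)))\<bar> \<le> \<epsilon>\<^sup>2 * ((K4x + K4y) * h\<^sup>2 / 12)"
      unfolding abs_mult using mult_left_mono[OF space, of "\<epsilon>\<^sup>2"] by simp
    then show ?thesis using time order_trans[OF abs_triangle_ineq4 add_mono] by blast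
  qed
  also have "\<dots> \<le> (4 * K3 + K2 / (8 * \<epsilon>\<^sup>2) + \<epsilon>\<^sup>2 * (K4x + K4y) / 12) * ((tau_max t N)\<^sup>2 + h\<^sup>2)"
  proof -
    have a1: "4 * K3 * (tau_max t N)\<^sup>2 \<le> 4 * K3 * ((tau_max t N)\<^sup>2 + h\<^sup>2)" using K0 by (simp add: mult_left_mono)
    have a2: "K2 * h\<^sup>2 / (8 * \<epsilon>\<^sup>2) \<le> K2 / (8 * \<epsilon>\<^sup>2) * ((tau_max t N)\<^sup>2 + h\<^sup>2)"
    proof -
      have "K2 * h\<^sup>2 \<le> K2 * ((tau_max t N)\<^sup>2 + h\<^sup>2)" using K0 by (simp add: mult_left_mono)
      then have "K2 * h\<^sup>2 / (8 * \<epsilon>\<^sup>2) \<le> K2 * ((tau_max t N)\<^sup>2 + h\<^sup>2) / (8 * \<epsilon>\<^sup>2)"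
        by (rule divide_right_mono) simp
      then show ?thesis by simp
    qed
    have a3: "\<epsilon>\<^sup>2 * ((K4x + K4y) * h\<^sup>2 / 12) \<le> \<epsilon>\<^sup>2 * (K4x + K4y) / 12 * ((tau_max t N)\<^sup>2 + h\<^sup>2)"
    proof -
      have "(\<epsilon>\<^sup>2 * (K4x + K4y) / 12) * h\<^sup>2 \<le> (\<epsilon>\<^sup>2 * (K4x + K4y) / 12) * ((tau_max t N)\<^sup>2 + h\<^sup>2)"
        using K0 by (intro mult_left_mono) auto
      then show ?thesis by (simp add: algebra_simps)
    qed
    have "(4 * K3 + K2 / (8 * \<epsilon>\<^sup>2) + \<epsilon>\<^sup>2 * (K4x + K4y) / 12) * ((tau_max t N)\<^sup>2 + h\<^sup>2)
      = 4 * K3 * ((tau_max t N)\<^sup>2 + h\<^sup>2) + K2 / (8 * \<epsilon>\<^sup>2) * ((tau_max t N)\<^sup>2 + h\<^sup>2)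
        + \<epsilon>\<^sup>2 * (K4x + K4y) / 12 * ((tau_max t N)\<^sup>2 + h\<^sup>2)" by (simp only: distrib_right)
    then show ?thesis using a1 a2 a3 by linarith
  qed
  finally show ?thesis .
qed

theorem theorem5p1:
  fixes L \<epsilon> T :: real and u :: "real \<times> real \<times> real \<Rightarrow> real"
  assumes "L > 0" and "\<epsilon> > 0" and "T > 0"
    and smooth: "smooth_fun u"
    and per_x: "\<And>x y s. u (x + L, y, s) = u (x, y, s)"
    and per_y: "\<And>x y s. u (x, y + L, s) = u (x, y, s)"
    and pde: "\<And>x y s. 0 < s \<Longrightarrow> s \<le> T \<Longrightarrow>
               dt u x y s = \<epsilon>\<^sup>2 * (dxx u x y s + dyy u x y s) - fAC (u (x, y, s))"
    and init: "\<And>x y. \<bar>u (x, y, 0)\<bar> \<le> 1"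
  shows "\<exists>C. \<forall>(M::nat) (N::nat) (t::nat \<Rightarrow> real) (rs::real) (U::nat \<Rightarrow> nat \<Rightarrow> nat \<Rightarrow> real).
     let h = L / real M; \<eta> = 2 * rs\<^sup>2 / (1 + rs)\<^sup>2 in
     (M \<ge> 1 \<and> t 0 = 0 \<and> t N = T \<and> (\<forall>k\<in>{1..N}. t (k - 1) < t k)
      \<and> 1 \<le> rs \<and> rs < 1 + sqrt 2
      \<and> (\<forall>k\<in>{2..N}. 0 < ratio t k \<and> ratio t k \<le> rs)
      \<and> (\<forall>n\<in>{1..N}. tau t n \<le> ((1 + 2 * ratio t n) * \<eta> - (ratio t n)\<^sup>2) / (\<eta>\<^sup>2 * (1 + ratio t n))
                                  * ((1 - \<eta>) / (2 + 4 * \<epsilon>\<^sup>2 / h\<^sup>2)))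
      \<and> (\<forall>i j. U 0 i j = u (real i * h, real j * h, 0))
      \<and> (\<forall>n\<in>{1..N}. \<forall>i\<in>{1..M}. \<forall>j\<in>{1..M}.
            D2 t U n i j = \<epsilon>\<^sup>2 * lap_h h M (U n) i j - fAC (U n i j)))
     \<longrightarrow> (\<forall>n\<in>{1..N}.
            grid_maxnorm M (\<lambda>i j. u (real i * h, real j * h, t n) - U n i j)
              \<le> C * t n / (1 - \<eta>) * exp (4 * t n / (1 - \<eta>)) * ((tau_max t N)\<^sup>2 + h\<^sup>2))"
proof -
  note L = assms(1) and eps = assms(2) and Tpos = assms(3)
  have Ck: "Ck k u" for k using smooth by (simp add: smooth_fun_def)
  obtain ut where ut: "Ck (Suc (Suc 0)) ut" "\<forall>x y t. ((\<lambda>r. u (x, y, r)) has_real_derivative ut (x, y, t)) (at t)"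
    using Ck_dt[OF Ck[of "Suc (Suc (Suc 0))"]] by blast
  obtain utt where utt: "Ck (Suc 0) utt" "\<forall>x y t. ((\<lambda>r. ut (x, y, r)) has_real_derivative utt (x, y, t)) (at t)"
    using Ck_dt[OF ut(1)] by blast
  obtain uttt where uttt: "Ck 0 uttt" "\<forall>x y t. ((\<lambda>r. utt (x, y, r)) has_real_derivative uttt (x, y, t)) (at t)"
    using Ck_dt[OF utt(1)] by blast
  obtain ux where ux: "Ck (Suc (Suc (Suc 0))) ux" "\<forall>x y t. ((\<lambda>r. u (r, y, t)) has_real_derivative ux (x, y, t)) (at x)"
    using Ck_dx[OF Ck[of "Suc (Suc (Suc (Suc 0)))"]] by blast
  obtain uxx where uxx: "Ck (Suc (Suc 0)) uxx" "\<forall>x y t. ((\<lambda>r. ux (r, y, t)) has_real_derivative uxx (x, y, t)) (at x)"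
    using Ck_dx[OF ux(1)] by blast
  obtain uxxx where uxxx: "Ck (Suc 0) uxxx" "\<forall>x y t. ((\<lambda>r. uxx (r, y, t)) has_real_derivative uxxx (x, y, t)) (at x)"
    using Ck_dx[OF uxx(1)] by blast
  obtain uxxxx where uxxxx: "Ck 0 uxxxx" "\<forall>x y t. ((\<lambda>r. uxxx (r, y, t)) has_real_derivative uxxxx (x, y, t)) (at x)"
    using Ck_dx[OF uxxx(1)] by blast
  obtain uy where uy: "Ck (Suc (Suc (Suc 0))) uy" "\<forall>x y t. ((\<lambda>r. u (x, r, t)) has_real_derivative uy (x, y, t)) (at y)"
    using Ck_dy[OF Ck[of "Suc (Suc (Suc (Suc 0)))"]] by blast
  obtain uyy where uyy: "Ck (Suc (Suc 0)) uyy" "\<forall>x y t. ((\<lambda>r. uy (x, r, t)) has_real_derivative uyy (x, y, t)) (at y)"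
    using Ck_dy[OF uy(1)] by blast
  obtain uyyy where uyyy: "Ck (Suc 0) uyyy" "\<forall>x y t. ((\<lambda>r. uyy (x, r, t)) has_real_derivative uyyy (x, y, t)) (at y)"
    using Ck_dy[OF uyy(1)] by blast
  obtain uyyyy where uyyyy: "Ck 0 uyyyy" "\<forall>x y t. ((\<lambda>r. uyyy (x, r, t)) has_real_derivative uyyyy (x, y, t)) (at y)"
    using Ck_dy[OF uyyy(1)] by blast
  have dt_eq: "dt u x y s = ut (x, y, s)" for x y s
    unfolding dt_def by (rule DERIV_imp_deriv) (use ut(2) in blast)
  have dxx_eq: "dxx u x y s = uxx (x, y, s)" for x y s
  proof -
    have "(\<lambda>z. deriv (\<lambda>r. u (r, y, s)) z) = (\<lambda>z. ux (z, y, s))"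
      by (rule ext, rule DERIV_imp_deriv) (use ux(2) in blast)
    then show ?thesis unfolding dxx_def by (simp add: DERIV_imp_deriv uxx(2))
  qed
  have dyy_eq: "dyy u x y s = uyy (x, y, s)" for x y s
  proof -
    have "(\<lambda>z. deriv (\<lambda>r. u (x, r, s)) z) = (\<lambda>z. uy (x, z, s))"
      by (rule ext, rule DERIV_imp_deriv) (use uy(2) in blast)
    then show ?thesis unfolding dyy_def by (simp add: DERIV_imp_deriv uyy(2))
  qed
  have pde': "ut (x, y, s) = \<epsilon>\<^sup>2 * (uxx (x, y, s) + uyy (x, y, s)) - fAC (u (x, y, s))"
    if "0 < s" "s \<le> T" for x y s
    using pde[OF that, of x y] unfolding dt_eq dxx_eq dyy_eq .
  have contu: "continuous_on UNIV u" using Ck_cont[OF Ck[of 0]] .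
  have init_up: "u (x, y, 0) \<le> 1" for x y using init[of x y] by (simp add: abs_le_iff)
  have ub: "\<bar>u (x, y, s)\<bar> \<le> 1" if "0 \<le> s" "s \<le> T" for x y s
  proof -
    have up: "u (x, y, s) \<le> 1"
      by (rule cont_mbp[OF L contu per_x per_y _ _ _ _ _ pde' _ that, where wx=ux and wy=uy])
         (use ut(2) ux(2) uxx(2) uy(2) uyy(2) init_up in auto)
    have lo: "(\<lambda>p. - u p) (x, y, s) \<le> 1"
    proof (rule cont_mbp[OF L _ _ _ _ _ _ _ _ _ _ that, where wt="\<lambda>p. - ut p" and wx="\<lambda>p. - ux p"
          and wxx="\<lambda>p. - uxx p" and wy="\<lambda>p. - uy p" and wyy="\<lambda>p. - uyy p" and \<epsilon>=\<epsilon>])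
      show "continuous_on UNIV (\<lambda>p. - u p)" using contu by (intro continuous_intros)
      show "- u (x + L, y, s) = - u (x, y, s)" for x y s using per_x by simp
      show "- u (x, y + L, s) = - u (x, y, s)" for x y s using per_y by simp
      show "((\<lambda>s. - u (x, y, s)) has_real_derivative - ut (x, y, t)) (at t)" for x y t
        using ut(2) by (auto intro!: derivative_eq_intros)
      show "((\<lambda>r. - u (r, y, t)) has_real_derivative - ux (x, y, t)) (at x)" for x y t
        using ux(2) by (auto intro!: derivative_eq_intros)
      show "((\<lambda>r. - ux (r, y, t)) has_real_derivative - uxx (x, y, t)) (at x)" for x y t
        using uxx(2) by (auto intro!: derivative_eq_intros)
      show "((\<lambda>r. - u (x, r, t)) has_real_derivative - uy (x, y, t)) (at y)" for x y t
        using uy(2) by (auto intro!: derivative_eq_intros)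
      show "((\<lambda>r. - uy (x, r, t)) has_real_derivative - uyy (x, y, t)) (at y)" for x y t
        using uyy(2) by (auto intro!: derivative_eq_intros)
      show "- ut (x, y, s) = \<epsilon>\<^sup>2 * (- uxx (x, y, s) + - uyy (x, y, s)) - fAC (- u (x, y, s))"
        if "0 < s" "s \<le> T" for x y s
        using pde'[OF that, of x y] by (simp add: fAC_neg algebra_simps)
      show "- u (x, y, 0) \<le> 1" for x y using init[of x y] by simp
    qed
    show ?thesis using up lo by simp
  qed
  define Bx where "Bx = {0..2*L} \<times> {0..2*L} \<times> {0..T}"
  have cBx: "compact Bx" unfolding Bx_def by (intro compact_Times compact_Icc)
  obtain K2 where K2: "K2 > 0" "\<forall>p\<in>Bx. \<bar>utt p\<bar> \<le> K2" using cont_bnd[OF Ck_cont[OF utt(1)] cBx] by blast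
  obtain K3 where K3: "K3 > 0" "\<forall>p\<in>Bx. \<bar>uttt p\<bar> \<le> K3" using cont_bnd[OF Ck_cont[OF uttt(1)] cBx] by blast
  obtain K4x where K4x: "K4x > 0" "\<forall>p\<in>Bx. \<bar>uxxxx p\<bar> \<le> K4x" using cont_bnd[OF Ck_cont[OF uxxxx(1)] cBx] by blast
  obtain K4y where K4y: "K4y > 0" "\<forall>p\<in>Bx. \<bar>uyyyy p\<bar> \<le> K4y" using cont_bnd[OF Ck_cont[OF uyyyy(1)] cBx] by blast
  define Kc where "Kc = 4 * K3 + K2 / (8 * \<epsilon>\<^sup>2) + \<epsilon>\<^sup>2 * (K4x + K4y) / 12"
  have Kc0: "Kc \<ge> 0" unfolding Kc_def using K2 K3 K4x K4y by simp
  show ?thesis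
  proof (rule exI[of _ "2 * Kc"], intro allI)
    fix M N :: nat and t :: "nat \<Rightarrow> real" and rs :: real and U :: "nat \<Rightarrow> nat \<Rightarrow> nat \<Rightarrow> real"
    define h where "h = L / real M"
    define \<eta> where "\<eta> = 2 * rs\<^sup>2 / (1 + rs)\<^sup>2"
    show "let h = L / real M; \<eta> = 2 * rs\<^sup>2 / (1 + rs)\<^sup>2 in
     (M \<ge> 1 \<and> t 0 = 0 \<and> t N = T \<and> (\<forall>k\<in>{1..N}. t (k - 1) < t k)
      \<and> 1 \<le> rs \<and> rs < 1 + sqrt 2
      \<and> (\<forall>k\<in>{2..N}. 0 < ratio t k \<and> ratio t k \<le> rs)
      \<and> (\<forall>n\<in>{1..N}. tau t n \<le> ((1 + 2 * ratio t n) * \<eta> - (ratio t n)\<^sup>2) / (\<eta>\<^sup>2 * (1 + ratio t n))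
                                  * ((1 - \<eta>) / (2 + 4 * \<epsilon>\<^sup>2 / h\<^sup>2)))
      \<and> (\<forall>i j. U 0 i j = u (real i * h, real j * h, 0))
      \<and> (\<forall>n\<in>{1..N}. \<forall>i\<in>{1..M}. \<forall>j\<in>{1..M}.
            D2 t U n i j = \<epsilon>\<^sup>2 * lap_h h M (U n) i j - fAC (U n i j)))
     \<longrightarrow> (\<forall>n\<in>{1..N}.
            grid_maxnorm M (\<lambda>i j. u (real i * h, real j * h, t n) - U n i j)
              \<le> 2 * Kc * t n / (1 - \<eta>) * exp (4 * t n / (1 - \<eta>)) * ((tau_max t N)\<^sup>2 + h\<^sup>2))"
      unfolding Let_def h_def[symmetric] \<eta>_def[symmetric]
    proof (intro impI)
      assume H: "M \<ge> 1 \<and> t 0 = 0 \<and> t N = T \<and> (\<forall>k\<in>{1..N}. t (k - 1) < t k)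
      \<and> 1 \<le> rs \<and> rs < 1 + sqrt 2
      \<and> (\<forall>k\<in>{2..N}. 0 < ratio t k \<and> ratio t k \<le> rs)
      \<and> (\<forall>n\<in>{1..N}. tau t n \<le> ((1 + 2 * ratio t n) * \<eta> - (ratio t n)\<^sup>2) / (\<eta>\<^sup>2 * (1 + ratio t n))
                                  * ((1 - \<eta>) / (2 + 4 * \<epsilon>\<^sup>2 / h\<^sup>2)))
      \<and> (\<forall>i j. U 0 i j = u (real i * h, real j * h, 0))
      \<and> (\<forall>n\<in>{1..N}. \<forall>i\<in>{1..M}. \<forall>j\<in>{1..M}.
            D2 t U n i j = \<epsilon>\<^sup>2 * lap_h h M (U n) i j - fAC (U n i j))"
      show "\<forall>n\<in>{1..N}.
            grid_maxnorm M (\<lambda>i j. u (real i * h, real j * h, t n) - U n i j)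
              \<le> 2 * Kc * t n / (1 - \<eta>) * exp (4 * t n / (1 - \<eta>)) * ((tau_max t N)\<^sup>2 + h\<^sup>2)"

      proof -
      note hyps = H
      have M1: "M \<ge> 1" using hyps by blast
      have t0: "t 0 = 0" using hyps by blast
      have tN: "t N = T" using hyps by blast
      have inc: "\<forall>k\<in>{1..N}. t (k - 1) < t k" using hyps by blast
      have rs1: "1 \<le> rs" using hyps by blast
      have rs2: "rs < 1 + sqrt 2" using hyps by blast
      have rat: "\<forall>k\<in>{2..N}. 0 < ratio t k \<and> ratio t k \<le> rs" using hyps by blast
      note step = hyps[THEN conjunct2, THEN conjunct2, THEN conjunct2, THEN conjunct2, THEN conjunct2,
          THEN conjunct2, THEN conjunct2, THEN conjunct1]
      have U0: "\<forall>i j. U 0 i j = u (real i * h, real j * h, 0)" using hyps by blast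
      note sch = hyps[THEN conjunct2, THEN conjunct2, THEN conjunct2, THEN conjunct2, THEN conjunct2,
          THEN conjunct2, THEN conjunct2, THEN conjunct2, THEN conjunct2]
      have T0: "0 \<le> T" using Tpos by simp
      have hpos: "h > 0" using L M1 by (simp add: h_def)
      have eta: "1/2 \<le> \<eta>" "\<eta> < 1" using eta_bounds[OF rs1 rs2] by (simp_all add: \<eta>_def)
      have eta0: "0 < \<eta>" using eta by simp
      define \<kappa> where "\<kappa> = 2 + 4 * \<epsilon>\<^sup>2 / h\<^sup>2"
      have kap: "\<kappa> \<ge> 2" by (simp add: \<kappa>_def)
      have kap': "\<kappa> = 2 + 4 * (\<epsilon>\<^sup>2 / h\<^sup>2)" by (simp add: \<kappa>_def)
      define A where "A n = (1 + 2 * ratio t n) / (tau t n * (1 + ratio t n))" for n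
      define Bc where "Bc n = (ratio t n)\<^sup>2 / (tau t n * (1 + ratio t n))" for n
      define cc where "cc n = (1 - \<eta>) * (A n - Bc n / \<eta>)" for n
      have ratio_nn: "ratio t n \<ge> 0" if "n \<in> {1..N}" for n
      proof (cases "n = 1")
        case True then show ?thesis by (simp add: ratio_def)
      next
        case False
        then have "n \<in> {2..N}" using that by auto
        then show ?thesis using rat by (meson less_imp_le)
      qed
      have SC: "(1 - \<eta>) * (A n - Bc n / \<eta>) \<ge> \<eta> * \<kappa> \<and> A n \<ge> \<kappa> \<and> A n > 1 \<and> A n - 1 \<ge> 1 / (2 * tau t n) \<and> Bc n \<ge> 0"
        if n: "n \<in> {1..N}" for n
      proof -
        have st: "tau t n \<le> ((1 + 2 * ratio t n) * \<eta> - (ratio t n)\<^sup>2) / (\<eta>\<^sup>2 * (1 + ratio t n)) * ((1 - \<eta>) / \<kappa>)"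
          using step n unfolding \<kappa>_def by blast
        show ?thesis using step_cond[OF tau_pos[OF inc n] ratio_nn[OF n] eta kap st] unfolding A_def Bc_def by auto
      qed
      have ccK: "cc n \<ge> \<eta> * (2 + 4 * (\<epsilon>\<^sup>2 / h\<^sup>2))" if "n \<in> {1..N}" for n
        using SC[OF that] kap' unfolding cc_def by simp
      have A1: "A n > 1" "A n - 1 \<ge> 1 / (2 * tau t n)" "Bc n \<ge> 0" if "n \<in> {1..N}" for n
        using SC[OF that] by auto
      have D2U: "A n * (U n i j - U (n - 1) i j) - Bc n * (U (n - 1) i j - U (n - 2) i j)
           = \<epsilon>\<^sup>2 * lap_h h M (U n) i j - fAC (U n i j)"
        if n: "n \<in> {1..N}" and ij: "i \<in> {1..M}" "j \<in> {1..M}" for n i j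
        using D2_ab[of n t U i j] sch n ij unfolding A_def Bc_def by auto
      have N1: "1 \<in> {1..N}"
      proof -
        have "N \<noteq> 0"
        proof
          assume "N = 0"
          then show False using t0 tN Tpos by simp
        qed
        then show ?thesis by simp
      qed
      have tau1: "tau t 1 \<le> h\<^sup>2 / (4 * \<epsilon>\<^sup>2)"
      proof -
        have tp: "tau t 1 > 0" using tau_pos[OF inc N1] .
        have "A 1 = 1 / tau t 1" by (simp add: A_def ratio_def)
        moreover have "A 1 \<ge> \<kappa>" using SC[OF N1] by simp
        ultimately have "1 / tau t 1 \<ge> 4 * \<epsilon>\<^sup>2 / h\<^sup>2" using kap unfolding \<kappa>_def by simp
        then have "4 * \<epsilon>\<^sup>2 / h\<^sup>2 * tau t 1 \<le> 1" using tp by (simp add: le_divide_eq)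
        then show ?thesis using hpos eps by (simp add: field_simps)
      qed
      have rat3: "ratio t k \<le> 3" if "k \<in> {2..N}" for k
        using rat that sqrt2_lt2 rs2 by force
      have mbp: "\<forall>i\<in>{1..M}. \<forall>j\<in>{1..M}. \<bar>U n i j\<bar> \<le> 1 \<and> \<bar>U n i j - \<eta> * U (n - 1) i j\<bar> \<le> 1 - \<eta>"
        if "n \<le> N" for n
        using that
      proof (induction n)
        case 0
        have "\<bar>U 0 i j\<bar> \<le> 1" for i j using U0 ub[OF order_refl T0] by simp
        moreover have "\<bar>U 0 i j - \<eta> * U 0 i j\<bar> = (1 - \<eta>) * \<bar>U 0 i j\<bar>" for i j
        proof -
          have "U 0 i j - \<eta> * U 0 i j = (1 - \<eta>) * U 0 i j" by (simp add: algebra_simps)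
          then show ?thesis using eta by (simp add: abs_mult)
        qed
        ultimately show ?case using eta by (simp add: mult_left_le)
      next
        case (Suc n)
        have n: "Suc n \<in> {1..N}" using Suc.prems by simp
        have IH: "\<forall>i\<in>{1..M}. \<forall>j\<in>{1..M}. \<bar>U n i j\<bar> \<le> 1 \<and> \<bar>U n i j - \<eta> * U (n - 1) i j\<bar> \<le> 1 - \<eta>"
          using Suc by simp
        have sch': "A (Suc n) * (U (Suc n) i j - U n i j) - Bc (Suc n) * (U n i j - U (n - 1) i j)
           = \<epsilon>\<^sup>2 * lap_h h M (U (Suc n)) i j - fAC (U (Suc n) i j)"
          if "i \<in> {1..M}" "j \<in> {1..M}" for i j
          using D2U[OF n that] by simp
        show ?case
        proof (intro ballI)
          fix i j assume ij: "i \<in> {1..M}" "j \<in> {1..M}"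
          have r: "\<bar>U (Suc n) i j - \<eta> * U n i j\<bar> \<le> 1 - \<eta>" "\<bar>U (Suc n) i j\<bar> \<le> 1"
            by (rule mbp_grid[OF M1 hpos eta0 eta(2) A1(1)[OF n] A1(3)[OF n] cc_def ccK[OF n] _ _ sch' ij],
                use IH in auto)+
          then show "\<bar>U (Suc n) i j\<bar> \<le> 1 \<and> \<bar>U (Suc n) i j - \<eta> * U (Suc n - 1) i j\<bar> \<le> 1 - \<eta>" by simp
        qed
      qed
      have tmono: "t a \<le> t b" if "a \<le> b" "b \<le> N" for a b using t_mono[OF inc that] .
      have tnn: "0 \<le> t a" if "a \<le> N" for a using tmono[of 0 a] that t0 by simp
      have tleT: "t a \<le> T" if "a \<le> N" for a using tmono[of a N] that tN by simp
      define uh where "uh = (\<lambda>n i j. u (real i * h, real j * h, t n))"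
      define e where "e = (\<lambda>n i j. uh n i j - U n i j)"
      define Rr where "Rr = (\<lambda>n i j. D2 t uh n i j - \<epsilon>\<^sup>2 * lap_h h M (uh n) i j + fAC (uh n i j))"
      define Rm where "Rm = Kc * ((tau_max t N)\<^sup>2 + h\<^sup>2)"
      have Rm0: "Rm \<ge> 0" unfolding Rm_def using Kc0 by simp
      have cons: "grid_maxnorm M (Rr n) \<le> Rm" if n: "n \<in> {1..N}" for n
      proof (rule grid_norm_le[OF M1])
        fix i j assume ij: "i \<in> {1..M}" "j \<in> {1..M}"
        show "\<bar>Rr n i j\<bar> \<le> Rm"
          unfolding Rr_def Rm_def Kc_def uh_def
          by (rule consistency[OF L eps M1 h_def per_x per_y ut(2)[rule_format] utt(2)[rule_format]
              uttt(2)[rule_format] ux(2)[rule_format] uxx(2)[rule_format] uxxx(2)[rule_format] uxxxx(2)[rule_format]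
              uy(2)[rule_format] uyy(2)[rule_format] uyyy(2)[rule_format] uyyyy(2)[rule_format]
              K2(2)[unfolded Bx_def, rule_format] K3(2)[unfolded Bx_def, rule_format]
              K4x(2)[unfolded Bx_def, rule_format] K4y(2)[unfolded Bx_def, rule_format]
              pde' t0 tN inc rat3 tau1 n ij])
      qed
      define qg where "qg = (\<lambda>n i j. (uh n i j)\<^sup>2 + uh n i j * U n i j + (U n i j)\<^sup>2)"
      have qb: "0 \<le> qg n i j \<and> qg n i j \<le> 3" if n: "n \<in> {1..N}" and ij: "i \<in> {1..M}" "j \<in> {1..M}" for n i j
      proof -
        have "\<bar>uh n i j\<bar> \<le> 1" unfolding uh_def using ub tnn tleT n by simp
        moreover have "\<bar>U n i j\<bar> \<le> 1" using mbp[of n] n ij by simp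
        ultimately show ?thesis unfolding qg_def using q_bounds by blast
      qed
      have eqE: "A n * (e n i j - e (n - 1) i j) - Bc n * (e (n - 1) i j - e (n - 2) i j)
          = \<epsilon>\<^sup>2 * lap_h h M (e n) i j - (qg n i j - 1) * e n i j + Rr n i j"
        if n: "n \<in> {1..N}" and ij: "i \<in> {1..M}" "j \<in> {1..M}" for n i j
      proof -
        have d1: "D2 t uh n i j = A n * (uh n i j - uh (n - 1) i j) - Bc n * (uh (n - 1) i j - uh (n - 2) i j)"
          using D2_ab[of n t uh i j] n unfolding A_def Bc_def by auto
        have d2: "A n * (U n i j - U (n - 1) i j) - Bc n * (U (n - 1) i j - U (n - 2) i j)
           = \<epsilon>\<^sup>2 * lap_h h M (U n) i j - fAC (U n i j)" using D2U[OF n ij] .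
        have le: "lap_h h M (e n) i j = lap_h h M (uh n) i j - lap_h h M (U n) i j"
          unfolding e_def by (rule lap_diff)
        have fd: "fAC (uh n i j) - fAC (U n i j) = (qg n i j - 1) * e n i j"
          unfolding qg_def e_def by (rule fAC_diff)
        have "A n * (e n i j - e (n - 1) i j) - Bc n * (e (n - 1) i j - e (n - 2) i j)
           = (A n * (uh n i j - uh (n - 1) i j) - Bc n * (uh (n - 1) i j - uh (n - 2) i j))
             - (A n * (U n i j - U (n - 1) i j) - Bc n * (U (n - 1) i j - U (n - 2) i j))"
          unfolding e_def by (simp add: algebra_simps)
        also have "\<dots> = D2 t uh n i j - (\<epsilon>\<^sup>2 * lap_h h M (U n) i j - fAC (U n i j))" unfolding d1 d2 ..
        also have "\<dots> = \<epsilon>\<^sup>2 * (lap_h h M (uh n) i j - lap_h h M (U n) i j) - (fAC (uh n i j) - fAC (U n i j)) + Rr n i j"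
          unfolding Rr_def by (simp add: algebra_simps)
        also have "\<dots> = \<epsilon>\<^sup>2 * lap_h h M (e n) i j - (qg n i j - 1) * e n i j + Rr n i j"
          unfolding le fd ..
        finally show ?thesis .
      qed
      define B where "B = (\<lambda>n. 2 * Rm * t n * exp (2 * t n / (1 - \<eta>)))"
      define v where "v = (\<lambda>n i j. e n i j - \<eta> * e (n - 1) i j)"
      have Bmono: "B a \<le> B b" if "a \<le> b" "b \<le> N" for a b
      proof -
        have "t a \<le> t b" "0 \<le> t a" using tmono tnn that by auto
        moreover have "exp (2 * t a / (1 - \<eta>)) \<le> exp (2 * t b / (1 - \<eta>))"
          using \<open>t a \<le> t b\<close> eta by (simp add: divide_right_mono)
        ultimately show ?thesis unfolding B_def using Rm0
          by (intro mult_mono mult_left_mono) auto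
      qed
      have B0: "B n \<ge> 0" if "n \<le> N" for n unfolding B_def using Rm0 tnn[OF that] by simp
      have main: "grid_maxnorm M (v n) \<le> B n \<and> grid_maxnorm M (e n) \<le> B n / (1 - \<eta>)" if "n \<le> N" for n
        using that
      proof (induction n)
        case 0
        have e0: "e 0 i j = 0" for i j unfolding e_def uh_def using U0 t0 by simp
        have v0: "v 0 i j = 0" for i j unfolding v_def using e0 by simp
        have "grid_maxnorm M (v 0) \<le> 0" by (rule grid_norm_le[OF M1]) (simp add: v0)
        moreover have "grid_maxnorm M (e 0) \<le> 0" by (rule grid_norm_le[OF M1]) (simp add: e0)
        ultimately show ?case by (simp add: B_def t0)
      next
        case (Suc n)
        have n': "Suc n \<in> {1..N}" using Suc.prems by simp
        have IH: "grid_maxnorm M (v n) \<le> B n" "grid_maxnorm M (e n) \<le> B n / (1 - \<eta>)" using Suc by simp_all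
        have eq': "A (Suc n) * (e (Suc n) i j - e n i j) - Bc (Suc n) * (e n i j - e (n - 1) i j)
           = \<epsilon>\<^sup>2 * lap_h h M (e (Suc n)) i j - (qg (Suc n) i j - 1) * e (Suc n) i j + Rr (Suc n) i j"
          if "i \<in> {1..M}" "j \<in> {1..M}" for i j
          using eqE[OF n' that] by simp
        have eg: "(A (Suc n) - 1) * grid_maxnorm M (\<lambda>i j. e (Suc n) i j - \<eta> * e n i j)
            \<le> (cc (Suc n) + \<eta>) * grid_maxnorm M (e n)
              + (Bc (Suc n) / \<eta>) * grid_maxnorm M (\<lambda>i j. e n i j - \<eta> * e (n - 1) i j) + grid_maxnorm M (Rr (Suc n))"
          by (rule err_grid[where Ea="e (n - 1)" and Eb="e n" and Ec="e (Suc n)" and Rg="Rr (Suc n)" and qg="qg (Suc n)",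
              OF M1 hpos eta0 eta(2) A1(1)[OF n'] A1(3)[OF n'] cc_def ccK[OF n'] qb[OF n'] eq'])
        have vS: "(\<lambda>i j. e (Suc n) i j - \<eta> * e n i j) = v (Suc n)" by (simp add: v_def)
        have vn: "(\<lambda>i j. e n i j - \<eta> * e (n - 1) i j) = v n" by (simp add: v_def)
        have ccnn: "cc (Suc n) + \<eta> \<ge> 0"
        proof -
          have "\<eta> * (2 + 4 * (\<epsilon>\<^sup>2 / h\<^sup>2)) \<ge> 0" using eta0 by simp
          then show ?thesis using ccK[OF n'] eta0 by linarith
        qed
        have bnn: "Bc (Suc n) / \<eta> \<ge> 0" using A1(3)[OF n'] eta0 by simp
        have t1: "(cc (Suc n) + \<eta>) * grid_maxnorm M (e n) \<le> (cc (Suc n) + \<eta>) * (B n / (1 - \<eta>))"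
          using IH(2) ccnn by (rule mult_left_mono)
        have t2: "(Bc (Suc n) / \<eta>) * grid_maxnorm M (v n) \<le> (Bc (Suc n) / \<eta>) * B n"
          using IH(1) bnn by (rule mult_left_mono)
        have idt: "(cc (Suc n) + \<eta>) * (B n / (1 - \<eta>)) + (Bc (Suc n) / \<eta>) * B n = (A (Suc n) + \<eta> / (1 - \<eta>)) * B n"
          using eta0 eta(2) unfolding cc_def by (simp add: field_simps)
        have ineq: "(A (Suc n) - 1) * grid_maxnorm M (v (Suc n)) \<le> (A (Suc n) + \<eta> / (1 - \<eta>)) * B n + Rm"
          using eg t1 t2 cons[OF n'] idt unfolding vS vn by linarith
        have "grid_maxnorm M (v (Suc n)) \<le> 2 * Rm * (t n + tau t (Suc n)) * exp (2 * (t n + tau t (Suc n)) / (1 - \<eta>))"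
          by (rule rec_step[OF A1(2)[OF n'] A1(1)[OF n'] tau_pos[OF inc n'] eta0 eta(2) Rm0 tnn _ ineq])
             (use Suc.prems in \<open>auto simp: B_def\<close>)
        also have "t n + tau t (Suc n) = t (Suc n)" by (simp add: tau_def)
        finally have vb: "grid_maxnorm M (v (Suc n)) \<le> B (Suc n)" unfolding B_def by simp
        have eS: "e (Suc n) = (\<lambda>i j. v (Suc n) i j + \<eta> * e n i j)" by (simp add: v_def)
        have "grid_maxnorm M (e (Suc n)) \<le> grid_maxnorm M (v (Suc n)) + \<eta> * grid_maxnorm M (e n)"
          unfolding eS by (rule grid_norm_comb[OF M1]) (use eta0 in simp)
        also have "\<dots> \<le> B (Suc n) + \<eta> * (B (Suc n) / (1 - \<eta>))"
        proof -
          have "B n / (1 - \<eta>) \<le> B (Suc n) / (1 - \<eta>)" using Bmono[of n "Suc n"] Suc.prems eta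
            by (simp add: divide_right_mono)
          then have "grid_maxnorm M (e n) \<le> B (Suc n) / (1 - \<eta>)" using IH(2) by linarith
          then show ?thesis using vb eta0 by (intro add_mono mult_left_mono) auto
        qed
        also have "\<dots> = B (Suc n) / (1 - \<eta>)" using eta by (simp add: field_simps)
        finally show ?case using vb by simp
      qed
      show ?thesis
      proof (intro ballI)
        fix n assume n: "n \<in> {1..N}"
        have en: "(\<lambda>i j. u (real i * h, real j * h, t n) - U n i j) = e n" by (simp add: e_def uh_def)
        define S where "S = (tau_max t N)\<^sup>2 + h\<^sup>2"
        define P where "P = 2 * Kc * t n / (1 - \<eta>) * S"
        have P0: "P \<ge> 0" unfolding P_def S_def using Kc0 tnn[of n] n eta by simp
        have "grid_maxnorm M (e n) \<le> B n / (1 - \<eta>)" using main[of n] n by simp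
        also have "B n / (1 - \<eta>) = P * exp (2 * t n / (1 - \<eta>))"
          unfolding B_def P_def Rm_def S_def using eta by (simp add: field_simps)
        also have "\<dots> \<le> P * exp (4 * t n / (1 - \<eta>))"
        proof -
          have "2 * t n / (1 - \<eta>) \<le> 4 * t n / (1 - \<eta>)" using tnn[of n] n eta by (simp add: divide_right_mono)
          then show ?thesis using P0 by (intro mult_left_mono) auto
        qed
        also have "\<dots> = 2 * Kc * t n / (1 - \<eta>) * exp (4 * t n / (1 - \<eta>)) * ((tau_max t N)\<^sup>2 + h\<^sup>2)"
          unfolding P_def S_def by (simp add: algebra_simps add_divide_distrib)
        finally show "grid_maxnorm M (\<lambda>i j. u (real i * h, real j * h, t n) - U n i j)
              \<le> 2 * Kc * t n / (1 - \<eta>) * exp (4 * t n / (1 - \<eta>)) * ((tau_max t N)\<^sup>2 + h\<^sup>2)"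
          unfolding en .
      qed
      qed
    qed
  qed
qed


end
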